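(* Let $\mathfrak{K}=\mathbb{Q}(p_1,\dots,p_\ell)$, let $R=\mathfrak{K}[x_1,\dots,x_n]$, and let $h_1,\dots,h_n\in R$ generate an ideal $I=\langle h_1,\dots,h_n\rangle\subset R$ that is generically radical and zero-dimensional. Fix $d\ge 0$, $p^*\in\mathbb{C}^\ell$, points $q_1,\dots,q_k\in\mathbb{C}^n$, and let $S_d(q_1,\dots,q_k)$ be a $k\times k$ submatrix of $M_d(q_1,\dots,q_k)$, obtained by selecting $k$ fixed columns; write $S_d(y_1,\dots,y_k)$ for the same column selection applied to $M_d(y_1,\dots,y_k)$. Let $G_{p^*}(x)=[h_{1,p^*}(x),\dots,h_{n,p^*}(x)]^T$. Suppose the well-constrained polynomial system in the unknowns $y_1,\dots,y_k\in\mathbb{C}^n$ and $\Lambda\in\mathbb{C}^{k\times k}$, $$\mathcal{G}(y_1,\dots,y_k,\Lambda)=\begin{bmatrix}G_{p^*}(y_1)\\ \vdots\\ G_{p^*}(y_k)\\ \Lambda\cdot S_d(y_1,\dots,y_k)-\mathbf{I}\end{bmatrix},$$ where $\mathbf{I}$ is the $k\times k$ identity matrix, has a nonsingular solution. Then $\mathrm{HF}_I(d)\ge k$.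
   Context: $\mathbb{Q}(p_1,\dots,p_\ell)$ is the field of rational functions in parameters $p=(p_1,\dots,p_\ell)$ with rational coefficients. For $h\in R$ and $p^*\in\mathbb{C}^\ell$, $h_{p^*}\in\mathbb{C}[x_1,\dots,x_n]$ denotes the polynomial obtained by specializing $p$ to $p^*$ (when all coefficients of $h$ are defined at $p^*$). $I$ is generically radical and zero-dimensional means: for general $p^*\in\mathbb{C}^\ell$, the ideal $I_{p^*}=\langle h_{1,p^*},\dots,h_{n,p^*}\rangle\subset\mathbb{C}[x_1,\dots,x_n]$ satisfies $\#\mathcal{V}(I_{p^*})=\deg I_{p^*}<\infty$. For $d\ge0$, $I_{\le d}$ denotes the $\mathfrak{K}$-vector space of polynomials in $I$ of degree at most $d$, and the affine Hilbert function is $\mathrm{HF}_I(d)=\binom{n+d}{d}-\dim_{\mathfrak{K}}(I_{\le d})$. The degree-$\le d$ Veronese map $\nu_d:\mathbb{C}^n\to\mathbb{C}^{\binom{n+d}{d}}$ sends $x$ to the row vector of all monomials in $x_1,\dots,x_n$ of degree at most $d$ (in a fixed order), and $M_d(y_1,\dots,y_k)$ is the $k\times\binom{n+d}{d}$ matrix whose $j$-th row is $\nu_d(y_j)$. A solution is nonsingular if the Jacobian of the system at it is invertible. *)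

theory Defs
  imports "HOL-Library.Poly_Mapping" "HOL-Computational_Algebra.Fraction_Field"
          "Jordan_Normal_Form.Determinant" "HOL-Analysis.Derivative"
begin

(* multivariate polynomials: exponent vectors (variable index \<Rightarrow>\<^sub>0 exponent) \<Rightarrow>\<^sub>0 coefficient *)
type_synonym 'a mpoly = "(nat \<Rightarrow>\<^sub>0 nat) \<Rightarrow>\<^sub>0 'a"

(* Q[p_1,...] and the field of rational functions in the parameters *)
type_synonym qpoly = "rat mpoly"
type_synonym kfield = "qpoly fract"

definition tdeg :: "(nat \<Rightarrow>\<^sub>0 nat) \<Rightarrow> nat" where
  "tdeg m = (\<Sum>i\<in>Poly_Mapping.keys m. Poly_Mapping.lookup m i)"

definition mono_eval :: "(nat \<Rightarrow>\<^sub>0 nat) \<Rightarrow> (nat \<Rightarrow> 'b::comm_ring_1) \<Rightarrow> 'b" where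
  "mono_eval m x = (\<Prod>i\<in>Poly_Mapping.keys m. x i ^ Poly_Mapping.lookup m i)"

definition mpolys :: "nat \<Rightarrow> ('a::zero) mpoly set" where
  "mpolys n = {f. \<forall>m\<in>Poly_Mapping.keys f. Poly_Mapping.keys m \<subseteq> {..<n}}"

definition meval :: "complex mpoly \<Rightarrow> (nat \<Rightarrow> complex) \<Rightarrow> complex" where
  "meval f x = (\<Sum>m\<in>Poly_Mapping.keys f. Poly_Mapping.lookup f m * mono_eval m x)"

definition qeval :: "qpoly \<Rightarrow> (nat \<Rightarrow> complex) \<Rightarrow> complex" where
  "qeval f x = (\<Sum>m\<in>Poly_Mapping.keys f. of_rat (Poly_Mapping.lookup f m) * mono_eval m x)"

definition in_K :: "nat \<Rightarrow> kfield \<Rightarrow> bool" where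
  "in_K l c = (\<exists>a b. b \<noteq> 0 \<and> a \<in> mpolys l \<and> b \<in> mpolys l \<and> c = Fract a b)"

definition kdefined :: "kfield \<Rightarrow> (nat \<Rightarrow> complex) \<Rightarrow> bool" where
  "kdefined c p = (\<exists>a b. c = Fract a b \<and> qeval b p \<noteq> 0)"

definition kval :: "kfield \<Rightarrow> (nat \<Rightarrow> complex) \<Rightarrow> complex" where
  "kval c p = (THE v. \<exists>a b. c = Fract a b \<and> qeval b p \<noteq> 0 \<and> v = qeval a p / qeval b p)"

definition coeffs_defined :: "kfield mpoly \<Rightarrow> (nat \<Rightarrow> complex) \<Rightarrow> bool" where
  "coeffs_defined h p = (\<forall>m\<in>Poly_Mapping.keys h. kdefined (Poly_Mapping.lookup h m) p)"

definition spec :: "kfield mpoly \<Rightarrow> (nat \<Rightarrow> complex) \<Rightarrow> complex mpoly" where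
  "spec h p = Poly_Mapping.map (\<lambda>c. kval c p) h"

definition ideal_gen :: "nat \<Rightarrow> ('a::comm_ring_1) mpoly list \<Rightarrow> 'a mpoly set" where
  "ideal_gen n hs = {\<Sum>i<length hs. g i * hs ! i | g. \<forall>i<length hs. g i \<in> mpolys n}"

definition cscale :: "'a::comm_ring_1 \<Rightarrow> 'a mpoly \<Rightarrow> 'a mpoly" where
  "cscale c f = Poly_Mapping.single 0 c * f"

definition quot_dim :: "nat \<Rightarrow> complex mpoly set \<Rightarrow> nat \<Rightarrow> bool" where
  "quot_dim n J N = (\<exists>B. finite B \<and> card B = N \<and> B \<subseteq> mpolys n \<and>
      (\<forall>c. (\<Sum>b\<in>B. cscale (c b) b) \<in> J \<longrightarrow> (\<forall>b\<in>B. c b = 0)) \<and>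
      (\<forall>f\<in>mpolys n. \<exists>c. f - (\<Sum>b\<in>B. cscale (c b) b) \<in> J))"

(* points of C^n, encoded as functions vanishing at indices >= n *)
definition variety :: "nat \<Rightarrow> complex mpoly list \<Rightarrow> (nat \<Rightarrow> complex) set" where
  "variety n gs = {x. (\<forall>i\<ge>n. x i = 0) \<and> (\<forall>g\<in>set gs. meval g x = 0)}"

definition generically_radical_zero_dim :: "nat \<Rightarrow> nat \<Rightarrow> kfield mpoly list \<Rightarrow> bool" where
  "generically_radical_zero_dim l n hs =
     (\<exists>g::complex mpoly. g \<in> mpolys l \<and> g \<noteq> 0 \<and>
        (\<forall>p. meval g p \<noteq> 0 \<longrightarrow>
           (\<forall>h\<in>set hs. coeffs_defined h p) \<and>
           (let gs = map (\<lambda>h. spec h p) hs in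
              finite (variety n gs) \<and> quot_dim n (ideal_gen n gs) (card (variety n gs)))))"

definition ideal_le :: "kfield mpoly set \<Rightarrow> nat \<Rightarrow> kfield mpoly set" where
  "ideal_le I d = {f\<in>I. \<forall>m\<in>Poly_Mapping.keys f. tdeg m \<le> d}"

definition HF :: "nat \<Rightarrow> kfield mpoly set \<Rightarrow> nat \<Rightarrow> int" where
  "HF n I d = int ((n + d) choose d) - int (vector_space.dim (cscale :: kfield \<Rightarrow> _) (ideal_le I d))"

(* the square system G(y_1..y_k, Lambda); unknowns z indexed:
   y_j coordinate i  \<mapsto> j*n + i   (j<k, i<n),
   Lambda_{a,b}      \<mapsto> k*n + a*k + b (a,b<k) *)
definition yvec :: "nat \<Rightarrow> (nat \<Rightarrow> complex) \<Rightarrow> nat \<Rightarrow> nat \<Rightarrow> complex" where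
  "yvec n z j = (\<lambda>i. if i < n then z (j*n + i) else 0)"

definition sysG :: "nat \<Rightarrow> nat \<Rightarrow> complex mpoly list \<Rightarrow> (nat \<Rightarrow>\<^sub>0 nat) list
                    \<Rightarrow> nat \<Rightarrow> (nat \<Rightarrow> complex) \<Rightarrow> complex" where
  "sysG n k gs sel r z =
     (if r < k*n then meval (gs ! (r mod n)) (yvec n z (r div n))
      else (let a = (r - k*n) div k; b = (r - k*n) mod k in
        (\<Sum>c<k. z (k*n + a*k + c) * mono_eval (sel ! b) (yvec n z c))
        - (if a = b then 1 else 0)))"

definition jacobian :: "nat \<Rightarrow> (nat \<Rightarrow> (nat \<Rightarrow> complex) \<Rightarrow> complex) \<Rightarrow> (nat \<Rightarrow> complex) \<Rightarrow> complex Matrix.mat" where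
  "jacobian N F z = Matrix.mat N N (\<lambda>(r, c). deriv (\<lambda>t. F r (z(c := t))) (z c))"

end

theory Submission
  imports Defs "HOL-Computational_Algebra.Polynomial"
begin

definition ev :: "('a::zero \<Rightarrow> complex) \<Rightarrow> ((nat \<Rightarrow>\<^sub>0 nat) \<Rightarrow>\<^sub>0 'a) \<Rightarrow> (nat \<Rightarrow> complex) \<Rightarrow> complex" where
  "ev \<phi> f x = (\<Sum>m\<in>Poly_Mapping.keys f. \<phi> (Poly_Mapping.lookup f m) * mono_eval m x)"

definition phom :: "('a::comm_ring_1 \<Rightarrow> complex) \<Rightarrow> 'a set \<Rightarrow> bool" where
  "phom \<phi> S \<longleftrightarrow> 0 \<in> S \<and> \<phi> 0 = 0 \<and> (\<forall>a\<in>S. \<forall>b\<in>S. a + b \<in> S \<and> a * b \<in> S \<and>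
      \<phi> (a + b) = \<phi> a + \<phi> b \<and> \<phi> (a * b) = \<phi> a * \<phi> b)"

definition cin :: "((nat \<Rightarrow>\<^sub>0 nat) \<Rightarrow>\<^sub>0 'a::zero) \<Rightarrow> 'a set \<Rightarrow> bool" where
  "cin f S \<longleftrightarrow> (\<forall>m. Poly_Mapping.lookup f m \<in> S)"

lemma mono_eval_over:
  assumes "finite U" "Poly_Mapping.keys m \<subseteq> U"
  shows "mono_eval m x = (\<Prod>i\<in>U. x i ^ Poly_Mapping.lookup m i)"
  unfolding mono_eval_def
  by (rule prod.mono_neutral_left) (use assms in \<open>auto simp: in_keys_iff\<close>)

lemma mono_eval_zero [simp]: "mono_eval 0 x = 1"
  by (simp add: mono_eval_def)

lemma keys_add_nat: "Poly_Mapping.keys (a + b :: nat \<Rightarrow>\<^sub>0 nat) = Poly_Mapping.keys a \<union> Poly_Mapping.keys b"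
  by (auto simp: in_keys_iff lookup_add)

lemma mono_eval_add: "mono_eval (a + b) x = mono_eval a x * mono_eval b x"
proof -
  let ?U = "Poly_Mapping.keys a \<union> Poly_Mapping.keys b"
  have "mono_eval (a + b) x = (\<Prod>i\<in>?U. x i ^ Poly_Mapping.lookup (a+b) i)"
    by (rule mono_eval_over) (auto simp: keys_add_nat)
  also have "\<dots> = (\<Prod>i\<in>?U. x i ^ Poly_Mapping.lookup a i) * (\<Prod>i\<in>?U. x i ^ Poly_Mapping.lookup b i)"
    by (simp add: lookup_add power_add prod.distrib)
  also have "\<dots> = mono_eval a x * mono_eval b x"
    by (subst (1 2) mono_eval_over[where U="?U"]) auto
  finally show ?thesis .
qed

lemma ev_over:
  assumes "finite U" "Poly_Mapping.keys f \<subseteq> U" "\<phi> 0 = 0"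
  shows "ev \<phi> f x = (\<Sum>m\<in>U. \<phi> (Poly_Mapping.lookup f m) * mono_eval m x)"
  unfolding ev_def
  by (rule sum.mono_neutral_left) (use assms in \<open>auto simp: in_keys_iff\<close>)

lemma ev_single: "\<phi> 0 = 0 \<Longrightarrow> ev \<phi> (Poly_Mapping.single m c) x = \<phi> c * mono_eval m x"
  by (cases "c = 0") (auto simp: ev_def)

lemma ev_zero [simp]: "ev \<phi> 0 x = 0"
  by (simp add: ev_def)

lemma ev_add:
  assumes "phom \<phi> S" "cin f S" "cin g S"
  shows "ev \<phi> (f + g) x = ev \<phi> f x + ev \<phi> g x"
  unfolding ev_def
  by (rule setsum_keys_plus_distrib) (use assms in \<open>auto simp: phom_def cin_def distrib_right\<close>)

lemma cin_add: "phom \<phi> S \<Longrightarrow> cin f S \<Longrightarrow> cin g S \<Longrightarrow> cin (f + g) S"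
  by (auto simp: cin_def phom_def lookup_add)

lemma cin_zero: "phom \<phi> S \<Longrightarrow> cin 0 S"
  by (auto simp: cin_def phom_def)

lemma cin_single: "phom \<phi> S \<Longrightarrow> c \<in> S \<Longrightarrow> cin (Poly_Mapping.single m c) S"
  by (auto simp: cin_def phom_def lookup_single when_def)

lemma cin_sum: "phom \<phi> S \<Longrightarrow> (\<And>i. i \<in> A \<Longrightarrow> cin (F i) S) \<Longrightarrow> cin (\<Sum>i\<in>A. F i) S"
  by (induction A rule: infinite_finite_induct) (auto intro: cin_add cin_zero)

lemma ev_sum:
  assumes "phom \<phi> S" "\<And>i. i \<in> A \<Longrightarrow> cin (F i) S"
  shows "ev \<phi> (\<Sum>i\<in>A. F i) x = (\<Sum>i\<in>A. ev \<phi> (F i) x)"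
  using assms(2)
proof (induction A rule: infinite_finite_induct)
  case (insert a A)
  then show ?case
    by (simp add: ev_add[OF assms(1)] cin_sum[OF assms(1)])
qed auto

lemma poly_mapping_sum_single:
  "f = (\<Sum>a\<in>Poly_Mapping.keys f. Poly_Mapping.single a (Poly_Mapping.lookup f a))"
proof (rule poly_mapping_eqI)
  fix k
  show "Poly_Mapping.lookup f k = Poly_Mapping.lookup (\<Sum>a\<in>Poly_Mapping.keys f. Poly_Mapping.single a (Poly_Mapping.lookup f a)) k"
    by (cases "k \<in> Poly_Mapping.keys f")
       (auto simp: lookup_sum lookup_single when_def in_keys_iff)
qed

lemma ev_mult:
  fixes f g :: "(nat \<Rightarrow>\<^sub>0 nat) \<Rightarrow>\<^sub>0 'a::comm_ring_1"
  assumes S: "phom \<phi> S" and f: "cin f S" and g: "cin g S"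
  shows "ev \<phi> (f * g) x = ev \<phi> f x * ev \<phi> g x"
proof -
  let ?sf = "\<lambda>a. Poly_Mapping.single a (Poly_Mapping.lookup f a)"
  let ?sg = "\<lambda>b. Poly_Mapping.single b (Poly_Mapping.lookup g b)"
  have S0: "\<phi> 0 = 0" and Sm: "\<And>a b. a \<in> S \<Longrightarrow> b \<in> S \<Longrightarrow> a * b \<in> S \<and> \<phi> (a * b) = \<phi> a * \<phi> b"
    using S by (auto simp: phom_def)
  have fS: "\<And>a. Poly_Mapping.lookup f a \<in> S" and gS: "\<And>a. Poly_Mapping.lookup g a \<in> S"
    using f g by (auto simp: cin_def)
  have "f * g = (\<Sum>a\<in>Poly_Mapping.keys f. ?sf a) * (\<Sum>b\<in>Poly_Mapping.keys g. ?sg b)"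
    by (subst (1) poly_mapping_sum_single[of f], subst (1) poly_mapping_sum_single[of g]) (rule refl)
  also have "\<dots> = (\<Sum>a\<in>Poly_Mapping.keys f. \<Sum>b\<in>Poly_Mapping.keys g. ?sf a * ?sg b)"
    by (simp add: sum_distrib_left sum_distrib_right sum.swap[of _ "Poly_Mapping.keys g"])
  finally have fg: "f * g = (\<Sum>a\<in>Poly_Mapping.keys f. \<Sum>b\<in>Poly_Mapping.keys g.
      Poly_Mapping.single (a + b) (Poly_Mapping.lookup f a * Poly_Mapping.lookup g b))"
    by (simp add: mult_single)
  have cs: "\<And>a b. cin (Poly_Mapping.single (a + b) (Poly_Mapping.lookup f a * Poly_Mapping.lookup g b)) S"
    by (rule cin_single[OF S]) (use Sm fS gS in blast)
  have "ev \<phi> (f * g) x = (\<Sum>a\<in>Poly_Mapping.keys f. \<Sum>b\<in>Poly_Mapping.keys g.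
      \<phi> (Poly_Mapping.lookup f a) * mono_eval a x * (\<phi> (Poly_Mapping.lookup g b) * mono_eval b x))"
    unfolding fg
    apply (subst ev_sum[OF S])
     apply (rule cin_sum[OF S], rule cs)
    apply (rule sum.cong, rule refl)
    apply (subst ev_sum[OF S], rule cs)
    apply (rule sum.cong, rule refl)
    apply (simp add: ev_single[of \<phi>, OF S0] mono_eval_add Sm[OF fS gS])
    done
  also have "\<dots> = ev \<phi> f x * ev \<phi> g x"
    by (simp add: ev_def sum_product)
  finally show ?thesis .
qed

lemma phom_id: "phom (\<lambda>c::complex. c) UNIV"
  by (simp add: phom_def)

lemma phom_of_rat: "phom (of_rat :: rat \<Rightarrow> complex) UNIV"
  by (simp add: phom_def of_rat_add of_rat_mult)

lemma cin_UNIV [simp]: "cin f UNIV"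
  by (simp add: cin_def)

lemma meval_ev: "meval f x = ev (\<lambda>c. c) f x"
  by (simp add: meval_def ev_def)

lemma qeval_ev: "qeval f x = ev of_rat f x"
  by (simp add: qeval_def ev_def)

lemma qeval_mult: "qeval (f * g) x = qeval f x * qeval g x"
  unfolding qeval_ev by (rule ev_mult[OF phom_of_rat]) auto

lemma qeval_add: "qeval (f + g) x = qeval f x + qeval g x"
  unfolding qeval_ev by (rule ev_add[OF phom_of_rat]) auto

lemma qeval_zero [simp]: "qeval 0 x = 0"
  by (simp add: qeval_def)


lemma qeval_one [simp]: "qeval 1 x = 1"
  by (simp add: qeval_def)

lemma qeval_nz: "qeval b p \<noteq> 0 \<Longrightarrow> b \<noteq> 0"
  by auto

lemma kval_eq:
  assumes "c = Fract a b" "qeval b p \<noteq> 0"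
  shows "kval c p = qeval a p / qeval b p"
  unfolding kval_def
proof (rule the_equality)
  show "\<exists>a' b'. c = Fract a' b' \<and> qeval b' p \<noteq> 0 \<and> qeval a p / qeval b p = qeval a' p / qeval b' p"
    using assms by blast
next
  fix v assume "\<exists>a' b'. c = Fract a' b' \<and> qeval b' p \<noteq> 0 \<and> v = qeval a' p / qeval b' p"
  then obtain a' b' where h: "c = Fract a' b'" "qeval b' p \<noteq> 0" "v = qeval a' p / qeval b' p" by blast
  have "b \<noteq> 0" "b' \<noteq> 0" using assms h by auto
  then have "a * b' = a' * b" using assms h eq_fract(1) by metis
  then have "qeval a p * qeval b' p = qeval a' p * qeval b p" by (metis qeval_mult)
  then have "qeval a p / qeval b p = qeval a' p / qeval b' p"
    using h(2) assms(2) by (simp add: frac_eq_eq)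
  then show "v = qeval a p / qeval b p" using h(3) by simp
qed

lemma kval_zero [simp]: "kval 0 p = 0"
  by (rule kval_eq[of 0 0 1, THEN trans]) (simp_all add: fract_collapse)

definition Dp :: "(nat \<Rightarrow> complex) \<Rightarrow> kfield set" where
  "Dp p = {c. kdefined c p}"

lemma phom_kval: "phom (\<lambda>c. kval c p) (Dp p)"
  unfolding phom_def
proof (intro conjI ballI)
  show "0 \<in> Dp p" unfolding Dp_def kdefined_def
    by (rule CollectI, rule exI[of _ 0], rule exI[of _ 1]) (simp add: fract_collapse)
  show "kval 0 p = 0" by simp
  fix x y assume "x \<in> Dp p" "y \<in> Dp p"
  then obtain a b c d where x: "x = Fract a b" "qeval b p \<noteq> 0" and y: "y = Fract c d" "qeval d p \<noteq> 0"
    unfolding Dp_def kdefined_def by blast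
  have nz: "b \<noteq> 0" "d \<noteq> 0" using x y by auto
  have s: "x + y = Fract (a * d + c * b) (b * d)" using x y nz by simp
  have m: "x * y = Fract (a * c) (b * d)" using x y by simp
  have bd: "qeval (b * d) p \<noteq> 0" using x y by (simp add: qeval_mult)
  show "x + y \<in> Dp p" "x * y \<in> Dp p" unfolding Dp_def kdefined_def using s m bd by blast+
  show "kval (x + y) p = kval x p + kval y p"
    unfolding kval_eq[OF s bd] kval_eq[OF x] kval_eq[OF y] qeval_mult qeval_add
    using x(2) y(2) by (simp add: add_frac_eq)
  show "kval (x * y) p = kval x p * kval y p"
    unfolding kval_eq[OF m bd] kval_eq[OF x] kval_eq[OF y] qeval_mult
    by simp
qed

lemma lookup_spec: "Poly_Mapping.lookup (spec h p) m = kval (Poly_Mapping.lookup h m) p"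
  by (simp add: spec_def Poly_Mapping.map.rep_eq when_def)

lemma keys_spec: "Poly_Mapping.keys (spec h p) \<subseteq> Poly_Mapping.keys h"
  by (auto simp: in_keys_iff lookup_spec)

lemma meval_spec: "meval (spec h p) x = ev (\<lambda>c. kval c p) h x"
proof -
  have "meval (spec h p) x = (\<Sum>m\<in>Poly_Mapping.keys h. kval (Poly_Mapping.lookup h m) p * mono_eval m x)"
    unfolding meval_ev
    by (subst ev_over[where U="Poly_Mapping.keys h"]) (auto simp: keys_spec lookup_spec)
  then show ?thesis by (simp add: ev_def)
qed


lemma mono_eval_single: "mono_eval (Poly_Mapping.single v e) p = p v ^ e"
  by (cases "e = 0") (auto simp: mono_eval_def)

lemma mono_eval_split:
  "mono_eval m p = mono_eval (Poly_Mapping.update v 0 m) p * p v ^ Poly_Mapping.lookup m v"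
proof -
  have "m = Poly_Mapping.update v 0 m + Poly_Mapping.single v (Poly_Mapping.lookup m v)"
    by (rule poly_mapping_eqI) (auto simp: lookup_update lookup_add lookup_single when_def)
  then have "mono_eval m p = mono_eval (Poly_Mapping.update v 0 m + Poly_Mapping.single v (Poly_Mapping.lookup m v)) p"
    by simp
  then show ?thesis by (simp add: mono_eval_add mono_eval_single)
qed

lemma mono_eval_indep:
  assumes "v \<notin> Poly_Mapping.keys m"
  shows "mono_eval m (p(v := t)) = mono_eval m p"
  unfolding mono_eval_def using assms by (intro prod.cong) auto

lemma exists_nonroot_ball:
  fixes q :: "complex poly"
  assumes "q \<noteq> 0" "\<delta> > 0"
  shows "\<exists>t. cmod (t - a) < \<delta> \<and> poly q t \<noteq> 0"
proof (rule ccontr)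
  assume "\<not> ?thesis"
  then have "ball a \<delta> \<subseteq> {x. poly q x = 0}" by (auto simp: dist_norm norm_minus_commute)
  then have "finite (ball a \<delta>)" using poly_roots_finite[OF assms(1)] finite_subset by blast
  moreover have "ball a \<delta> \<noteq> {}" using assms by simp
  ultimately show False using finite_imp_not_open[of "ball a \<delta>"] by simp
qed

lemma poly_sum_monom:
  fixes \<beta> :: "nat \<Rightarrow> complex"
  assumes "finite E"
  shows "poly (\<Sum>e\<in>E. monom (\<beta> e) e) t = (\<Sum>e\<in>E. t ^ e * \<beta> e)"
  by (simp add: poly_sum poly_monom mult.commute)

lemma coeff_sum_monom:
  fixes \<beta> :: "nat \<Rightarrow> complex"
  assumes "finite E" "e0 \<in> E"
  shows "coeff (\<Sum>e\<in>E. monom (\<beta> e) e) e0 = \<beta> e0"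
proof -
  have "coeff (\<Sum>e\<in>E. monom (\<beta> e) e) e0 = (\<Sum>e\<in>E. if e = e0 then \<beta> e else 0)"
    by (simp add: coeff_sum coeff_monom)
  also have "\<dots> = \<beta> e0" using assms by (simp add: sum.delta)
  finally show ?thesis .
qed

lemma box_nonzero_gen:
  fixes a :: "nat \<Rightarrow> complex"
  assumes "\<delta> > 0"
  shows "\<forall>T c. finite T \<longrightarrow> (\<forall>m\<in>T. Poly_Mapping.keys m \<subseteq> {..<M}) \<longrightarrow> (\<exists>m\<in>T. c m \<noteq> 0) \<longrightarrow>
    (\<exists>p. (\<forall>i. cmod (p i - a i) < \<delta>) \<and> (\<Sum>m\<in>T. c m * mono_eval m p) \<noteq> 0)"
proof (induction M)
  case 0
  show ?case
  proof (intro allI impI)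
    fix T c assume T: "finite (T :: (nat \<Rightarrow>\<^sub>0 nat) set)" "\<forall>m\<in>T. Poly_Mapping.keys m \<subseteq> {..<0::nat}"
      "\<exists>m\<in>T. c m \<noteq> (0::complex)"
    have "T \<subseteq> {0}" using T(2) by auto
    then have T0: "T = {0}" using T(3) by auto
    show "\<exists>p. (\<forall>i. cmod (p i - a i) < \<delta>) \<and> (\<Sum>m\<in>T. c m * mono_eval m p) \<noteq> 0"
      using T(3) assms by (intro exI[of _ a]) (auto simp: T0)
  qed
next
  case (Suc M)
  show ?case
  proof (intro allI impI)
    fix T c assume T: "finite (T :: (nat \<Rightarrow>\<^sub>0 nat) set)" "\<forall>m\<in>T. Poly_Mapping.keys m \<subseteq> {..<Suc M}"
      "\<exists>m\<in>T. c m \<noteq> (0::complex)"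
    define r where "r m = Poly_Mapping.update M 0 m" for m :: "nat \<Rightarrow>\<^sub>0 nat"
    define ex where "ex m = Poly_Mapping.lookup m M" for m :: "nat \<Rightarrow>\<^sub>0 nat"
    define E where "E = ex ` T"
    define Te where "Te e = {m\<in>T. ex m = e}" for e
    define \<beta>f where "\<beta>f e p = (\<Sum>m\<in>Te e. c m * mono_eval (r m) p)" for e p
    have finE: "finite E" using T(1) by (simp add: E_def)
    have finTe: "finite (Te e)" for e using T(1) by (simp add: Te_def)
    have split: "(\<Sum>m\<in>T. c m * mono_eval m p) = (\<Sum>e\<in>E. p M ^ e * \<beta>f e p)" for p
    proof -
      have "(\<Sum>m\<in>T. c m * mono_eval m p) = (\<Sum>e\<in>E. \<Sum>m\<in>Te e. c m * mono_eval m p)"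
        unfolding E_def Te_def using T(1) by (rule sum.image_gen)
      also have "\<dots> = (\<Sum>e\<in>E. p M ^ e * \<beta>f e p)"
        unfolding \<beta>f_def sum_distrib_left
      proof (intro sum.cong refl)
        fix e m assume "m \<in> Te e"
        then have "ex m = e" by (simp add: Te_def)
        then show "c m * mono_eval m p = p M ^ e * (c m * mono_eval (r m) p)"
          unfolding r_def ex_def by (subst mono_eval_split[of m p M]) simp
      qed
      finally show ?thesis .
    qed
    have indep: "\<beta>f e (p(M := t)) = \<beta>f e p" for e p t
      unfolding \<beta>f_def r_def by (intro sum.cong refl) (simp add: mono_eval_indep keys_update)
    from T(3) obtain m0 where m0: "m0 \<in> T" "c m0 \<noteq> 0" by blast
    define e0 where "e0 = ex m0"
    have inj: "inj_on r (Te e)" for e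
    proof
      fix x y assume "x \<in> Te e" "y \<in> Te e" "r x = r y"
      then show "x = y" unfolding Te_def r_def ex_def
        by (intro poly_mapping_eqI) (metis (mono_tags, lifting) lookup_update mem_Collect_eq)
    qed
    have \<beta>r: "\<beta>f e p = (\<Sum>m'\<in>r ` Te e. c (the_inv_into (Te e) r m') * mono_eval m' p)" for e p
      unfolding \<beta>f_def by (subst sum.reindex[OF inj]) (simp add: the_inv_into_f_f[OF inj])
    have "\<exists>p. (\<forall>i. cmod (p i - a i) < \<delta>) \<and> \<beta>f e0 p \<noteq> 0"
      unfolding \<beta>r
    proof (rule Suc.IH[rule_format])
      show "finite (r ` Te e0)" using finTe by simp
      show "Poly_Mapping.keys m \<subseteq> {..<M}" if "m \<in> r ` Te e0" for m
      proof -
        have aux: "\<And>m x. m \<in> T \<Longrightarrow> x \<in> Poly_Mapping.keys m \<Longrightarrow> x \<noteq> M \<Longrightarrow> x < M"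
          using T(2) by (metis lessThan_iff less_SucE subsetD)
        show ?thesis using aux that by (auto simp: r_def keys_update Te_def)
      qed
      show "\<exists>m\<in>r ` Te e0. c (the_inv_into (Te e0) r m) \<noteq> 0"
      proof (intro bexI[of _ "r m0"])
        have "m0 \<in> Te e0" using m0 by (simp add: Te_def e0_def)
        then show "c (the_inv_into (Te e0) r (r m0)) \<noteq> 0" "r m0 \<in> r ` Te e0"
          using m0 by (simp_all add: the_inv_into_f_f[OF inj])
      qed
    qed
    then obtain p' where p': "\<forall>i. cmod (p' i - a i) < \<delta>" "\<beta>f e0 p' \<noteq> 0" by blast
    define q where "q = (\<Sum>e\<in>E. monom (\<beta>f e p') e)"
    have e0E: "e0 \<in> E" using m0 by (simp add: E_def e0_def)
    have "q \<noteq> 0"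
    proof
      assume "q = 0"
      then have "coeff q e0 = 0" by simp
      then show False using coeff_sum_monom[OF finE e0E, of "\<lambda>e. \<beta>f e p'"] p'(2) by (simp add: q_def)
    qed
    then obtain t where t: "cmod (t - a M) < \<delta>" "poly q t \<noteq> 0"
      using exists_nonroot_ball assms by blast
    show "\<exists>p. (\<forall>i. cmod (p i - a i) < \<delta>) \<and> (\<Sum>m\<in>T. c m * mono_eval m p) \<noteq> 0"
    proof (intro exI conjI)
      show "\<forall>i. cmod ((p'(M := t)) i - a i) < \<delta>" using p'(1) t(1) by auto
      have "(\<Sum>m\<in>T. c m * mono_eval m (p'(M := t))) = poly q t"
        unfolding split q_def poly_sum_monom[OF finE] indep by simp
      then show "(\<Sum>m\<in>T. c m * mono_eval m (p'(M := t))) \<noteq> 0" using t(2) by simp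
    qed
  qed
qed

lemma qpoly_box_nonzero:
  fixes Q :: qpoly and a :: "nat \<Rightarrow> complex"
  assumes "Q \<noteq> 0" "\<delta> > 0"
  shows "\<exists>p. (\<forall>i. cmod (p i - a i) < \<delta>) \<and> qeval Q p \<noteq> 0"
proof -
  have fin: "finite (\<Union>m\<in>Poly_Mapping.keys Q. Poly_Mapping.keys m)" by simp
  obtain M where M: "\<forall>m\<in>Poly_Mapping.keys Q. Poly_Mapping.keys m \<subseteq> {..<M}"
  proof -
    obtain M where "\<forall>x\<in>(\<Union>m\<in>Poly_Mapping.keys Q. Poly_Mapping.keys m). x < M"
      using finite_nat_bounded[OF fin] by (auto simp: lessThan_def)
    then show ?thesis using that by (meson UN_I lessThan_iff subsetI)
  qed
  have ne: "\<exists>m\<in>Poly_Mapping.keys Q. of_rat (Poly_Mapping.lookup Q m) \<noteq> (0::complex)"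
    using assms(1) by (metis all_not_in_conv in_keys_iff keys_eq_empty of_rat_eq_0_iff)
  show ?thesis
    using box_nonzero_gen[OF assms(2), where a=a and M=M, rule_format, OF finite_keys _ ne] M
    by (simp add: qeval_def)
qed


definition near :: "nat \<Rightarrow> real \<Rightarrow> (nat \<Rightarrow> complex) \<Rightarrow> (nat \<Rightarrow> complex) \<Rightarrow> bool" where
  "near P \<delta> x a \<longleftrightarrow> (\<forall>i<P. cmod (x i - a i) < \<delta>)"

type_synonym trip = "(nat \<Rightarrow> complex) \<times> (nat \<Rightarrow> complex) \<times> (nat \<Rightarrow> complex)"

definition nset :: "nat \<times> real \<Rightarrow> (nat \<Rightarrow> complex) \<Rightarrow> (nat \<Rightarrow> complex) \<Rightarrow> (nat \<Rightarrow> complex) \<Rightarrow> trip set" where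
  "nset z a b c = {x. near (fst z) (snd z) (fst x) a \<and> near (fst z) (snd z) (fst (snd x)) b \<and>
      near (fst z) (snd z) (snd (snd x)) c}"

definition F3 :: "(nat \<Rightarrow> complex) \<Rightarrow> (nat \<Rightarrow> complex) \<Rightarrow> (nat \<Rightarrow> complex) \<Rightarrow> trip filter" where
  "F3 a b c = (INF z\<in>{z::nat \<times> real. snd z > 0}. principal (nset z a b c))"

lemma near_mono:
  assumes "near P \<delta> x a" "P' \<le> P" "\<delta> \<le> \<delta>'"
  shows "near P' \<delta>' x a"
  unfolding near_def
proof (intro allI impI)
  fix i assume "i < P'"
  then have "i < P" using assms(2) by simp
  then show "cmod (x i - a i) < \<delta>'" using assms(1,3) unfolding near_def by (meson order_less_le_trans)
qed

lemma eventually_F3: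
  "eventually Q (F3 a b c) \<longleftrightarrow>
    (\<exists>P \<delta>. \<delta> > 0 \<and> (\<forall>p w v. near P \<delta> p a \<and> near P \<delta> w b \<and> near P \<delta> v c \<longrightarrow> Q (p, w, v)))"
proof -
  have "eventually Q (F3 a b c) \<longleftrightarrow> (\<exists>z\<in>{z::nat \<times> real. snd z > 0}. eventually Q (principal (nset z a b c)))"
    unfolding F3_def
  proof (rule eventually_INF_base)
    have "(0::nat, 1::real) \<in> {z::nat \<times> real. snd z > 0}" by simp
    then show "{z::nat \<times> real. snd z > 0} \<noteq> {}" by blast
    fix z1 z2 assume "z1 \<in> {z::nat \<times> real. snd z > 0}" "z2 \<in> {z::nat \<times> real. snd z > 0}"
    then show "\<exists>x\<in>{z::nat \<times> real. snd z > 0}. principal (nset x a b c) \<le> inf (principal (nset z1 a b c)) (principal (nset z2 a b c))"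
      by (intro bexI[of _ "(max (fst z1) (fst z2), min (snd z1) (snd z2))"])
         (auto simp: nset_def intro: near_mono)
  qed
  also have "\<dots> \<longleftrightarrow> (\<exists>P \<delta>. \<delta> > 0 \<and> (\<forall>p w v. near P \<delta> p a \<and> near P \<delta> w b \<and> near P \<delta> v c \<longrightarrow> Q (p, w, v)))"
    unfolding eventually_principal nset_def
  proof
    assume "\<exists>z\<in>{z::nat \<times> real. snd z > 0}. \<forall>x\<in>{x. near (fst z) (snd z) (fst x) a \<and> near (fst z) (snd z) (fst (snd x)) b \<and> near (fst z) (snd z) (snd (snd x)) c}. Q x"
    then obtain z where z: "snd z > 0" "\<forall>x\<in>{x. near (fst z) (snd z) (fst x) a \<and> near (fst z) (snd z) (fst (snd x)) b \<and> near (fst z) (snd z) (snd (snd x)) c}. Q x"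
      by blast
    then show "\<exists>P \<delta>. \<delta> > 0 \<and> (\<forall>p w v. near P \<delta> p a \<and> near P \<delta> w b \<and> near P \<delta> v c \<longrightarrow> Q (p, w, v))"
      by (intro exI[of _ "fst z"] exI[of _ "snd z"]) auto
  next
    assume "\<exists>P \<delta>. \<delta> > 0 \<and> (\<forall>p w v. near P \<delta> p a \<and> near P \<delta> w b \<and> near P \<delta> v c \<longrightarrow> Q (p, w, v))"
    then obtain P \<delta> where z: "\<delta> > 0" "\<forall>p w v. near P \<delta> p a \<and> near P \<delta> w b \<and> near P \<delta> v c \<longrightarrow> Q (p, w, v)"
      by blast
    then show "\<exists>z\<in>{z::nat \<times> real. snd z > 0}. \<forall>x\<in>{x. near (fst z) (snd z) (fst x) a \<and> near (fst z) (snd z) (fst (snd x)) b \<and> near (fst z) (snd z) (snd (snd x)) c}. Q x"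
      by (intro bexI[of _ "(P, \<delta>)"]) auto
  qed
  finally show ?thesis .
qed

lemma tendsto_F3_p: "((\<lambda>x. fst x i) \<longlongrightarrow> a i) (F3 a b c)"
  unfolding tendsto_iff eventually_F3
proof (intro allI impI)
  fix e :: real assume "e > 0"
  then show "\<exists>P \<delta>. \<delta> > 0 \<and> (\<forall>p w v. near P \<delta> p a \<and> near P \<delta> w b \<and> near P \<delta> v c \<longrightarrow> dist (fst (p, w, v) i) (a i) < e)"
    by (intro exI[of _ "Suc i"] exI[of _ e]) (auto simp: near_def dist_norm)
qed

lemma tendsto_F3_w: "((\<lambda>x. fst (snd x) i) \<longlongrightarrow> b i) (F3 a b c)"
  unfolding tendsto_iff eventually_F3
proof (intro allI impI)
  fix e :: real assume "e > 0"
  then show "\<exists>P \<delta>. \<delta> > 0 \<and> (\<forall>p w v. near P \<delta> p a \<and> near P \<delta> w b \<and> near P \<delta> v c \<longrightarrow> dist (fst (snd (p, w, v)) i) (b i) < e)"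
    by (intro exI[of _ "Suc i"] exI[of _ e]) (auto simp: near_def dist_norm)
qed

lemma tendsto_F3_v: "((\<lambda>x. snd (snd x) i) \<longlongrightarrow> c i) (F3 a b c)"
  unfolding tendsto_iff eventually_F3
proof (intro allI impI)
  fix e :: real assume "e > 0"
  then show "\<exists>P \<delta>. \<delta> > 0 \<and> (\<forall>p w v. near P \<delta> p a \<and> near P \<delta> w b \<and> near P \<delta> v c \<longrightarrow> dist (snd (snd (p, w, v)) i) (c i) < e)"
    by (intro exI[of _ "Suc i"] exI[of _ e]) (auto simp: near_def dist_norm)
qed

definition hasdd :: "nat \<Rightarrow> (nat \<Rightarrow> complex) \<Rightarrow> (nat \<Rightarrow> complex) \<Rightarrow>
    ((nat \<Rightarrow> complex) \<Rightarrow> (nat \<Rightarrow> complex) \<Rightarrow> complex) \<Rightarrow>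
    (nat \<Rightarrow> (nat \<Rightarrow> complex) \<Rightarrow> (nat \<Rightarrow> complex) \<Rightarrow> (nat \<Rightarrow> complex) \<Rightarrow> complex) \<Rightarrow> bool" where
  "hasdd N p0 w0 F D \<longleftrightarrow>
     (\<forall>p w v. F p w - F p v = (\<Sum>c<N. D c p w v * (w c - v c))) \<and>
     (\<forall>c<N. ((\<lambda>x. D c (fst x) (fst (snd x)) (snd (snd x))) \<longlongrightarrow> D c p0 w0 w0) (F3 p0 w0 w0)) \<and>
     ((\<lambda>x. F (fst x) (fst (snd x))) \<longlongrightarrow> F p0 w0) (F3 p0 w0 w0) \<and>
     ((\<lambda>x. F (fst x) (snd (snd x))) \<longlongrightarrow> F p0 w0) (F3 p0 w0 w0)"

definition good :: "nat \<Rightarrow> (nat \<Rightarrow> complex) \<Rightarrow> (nat \<Rightarrow> complex) \<Rightarrow>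
    ((nat \<Rightarrow> complex) \<Rightarrow> (nat \<Rightarrow> complex) \<Rightarrow> complex) \<Rightarrow> bool" where
  "good N p0 w0 F \<longleftrightarrow> (\<exists>D. hasdd N p0 w0 F D)"

lemma good_const:
  assumes "((\<lambda>x. g (fst x)) \<longlongrightarrow> g p0) (F3 p0 w0 w0)"
  shows "good N p0 w0 (\<lambda>p w. g p)"
  unfolding good_def hasdd_def using assms
  by (intro exI[of _ "\<lambda>c p w v. 0"]) auto

lemma good_var:
  assumes "i < N"
  shows "good N p0 w0 (\<lambda>p w. w i)"
  unfolding good_def hasdd_def
proof (intro exI[of _ "\<lambda>c p w v. if c = i then 1 else 0"] conjI allI impI)
  fix p w v :: "nat \<Rightarrow> complex"
  show "w i - v i = (\<Sum>c<N. (if c = i then 1 else 0) * (w c - v c))"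
  proof -
    have "(\<Sum>c<N. (if c = i then 1 else 0) * (w c - v c)) = (\<Sum>c<N. if c = i then w c - v c else 0)"
      by (rule sum.cong) auto
    then show ?thesis using assms by (simp add: sum.delta)
  qed
qed (auto intro: tendsto_F3_w tendsto_F3_v)

lemma good_add:
  assumes "good N p0 w0 F" "good N p0 w0 G"
  shows "good N p0 w0 (\<lambda>p w. F p w + G p w)"
proof -
  obtain D E where D: "hasdd N p0 w0 F D" and E: "hasdd N p0 w0 G E"
    using assms by (auto simp: good_def)
  show ?thesis unfolding good_def hasdd_def
  proof (intro exI[of _ "\<lambda>c p w v. D c p w v + E c p w v"] conjI allI impI)
    fix p w v
    have "F p w + G p w - (F p v + G p v) = (F p w - F p v) + (G p w - G p v)" by simp
    also have "\<dots> = (\<Sum>c<N. D c p w v * (w c - v c)) + (\<Sum>c<N. E c p w v * (w c - v c))"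
      using D E unfolding hasdd_def by metis
    also have "\<dots> = (\<Sum>c<N. (D c p w v + E c p w v) * (w c - v c))"
      unfolding sum.distrib[symmetric] by (rule sum.cong) (simp_all add: algebra_simps)
    finally show "F p w + G p w - (F p v + G p v) = (\<Sum>c<N. (D c p w v + E c p w v) * (w c - v c))" .
  qed (use D E in \<open>auto simp: hasdd_def intro!: tendsto_intros\<close>)
qed

lemma good_mult:
  assumes "good N p0 w0 F" "good N p0 w0 G"
  shows "good N p0 w0 (\<lambda>p w. F p w * G p w)"
proof -
  obtain D E where D: "hasdd N p0 w0 F D" and E: "hasdd N p0 w0 G E"
    using assms by (auto simp: good_def)
  show ?thesis unfolding good_def hasdd_def
  proof (intro exI[of _ "\<lambda>c p w v. F p w * E c p w v + G p v * D c p w v"] conjI allI impI)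
    fix p w v
    have "F p w * G p w - F p v * G p v = F p w * (G p w - G p v) + G p v * (F p w - F p v)"
      by (simp add: algebra_simps)
    also have "\<dots> = F p w * (\<Sum>c<N. E c p w v * (w c - v c)) + G p v * (\<Sum>c<N. D c p w v * (w c - v c))"
      using D E unfolding hasdd_def by metis
    also have "\<dots> = (\<Sum>c<N. (F p w * E c p w v + G p v * D c p w v) * (w c - v c))"
      unfolding sum_distrib_left sum.distrib[symmetric] by (rule sum.cong) (simp_all add: algebra_simps)
    finally show "F p w * G p w - F p v * G p v = (\<Sum>c<N. (F p w * E c p w v + G p v * D c p w v) * (w c - v c))" .
  next
    fix c assume "c < N"
    then show "((\<lambda>x. F (fst x) (fst (snd x)) * E c (fst x) (fst (snd x)) (snd (snd x)) +
       G (fst x) (snd (snd x)) * D c (fst x) (fst (snd x)) (snd (snd x))) \<longlongrightarrow>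
       F p0 w0 * E c p0 w0 w0 + G p0 w0 * D c p0 w0 w0) (F3 p0 w0 w0)"
      using D E unfolding hasdd_def by (intro tendsto_intros) auto
  qed (use D E in \<open>auto simp: hasdd_def intro!: tendsto_intros\<close>)
qed

lemma good_cconst: "good N p0 w0 (\<lambda>p w. a)"
  by (rule good_const) simp

lemma good_sum:
  assumes "\<And>j. j \<in> A \<Longrightarrow> good N p0 w0 (F j)"
  shows "good N p0 w0 (\<lambda>p w. \<Sum>j\<in>A. F j p w)"
  using assms
proof (induction A rule: infinite_finite_induct)
  case (infinite A) then show ?case by (simp add: good_cconst)
next
  case empty then show ?case by (simp add: good_cconst)
next
  case (insert a A)
  then show ?case by (simp add: good_add)
qed

lemma good_prod:
  assumes "\<And>j. j \<in> A \<Longrightarrow> good N p0 w0 (F j)"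
  shows "good N p0 w0 (\<lambda>p w. \<Prod>j\<in>A. F j p w)"
  using assms
proof (induction A rule: infinite_finite_induct)
  case (infinite A) then show ?case by (simp add: good_cconst)
next
  case empty then show ?case by (simp add: good_cconst)
next
  case (insert a A)
  then show ?case by (simp add: good_mult)
qed

lemma good_power:
  assumes "good N p0 w0 F"
  shows "good N p0 w0 (\<lambda>p w. F p w ^ e)"
proof (induction e)
  case 0 then show ?case by (simp add: good_cconst)
next
  case (Suc e) then show ?case using good_mult[OF assms Suc] by simp
qed

lemma good_diff:
  assumes "good N p0 w0 F" "good N p0 w0 G"
  shows "good N p0 w0 (\<lambda>p w. F p w - G p w)"
proof -
  have "good N p0 w0 (\<lambda>p w. F p w + (-1) * G p w)"
    by (intro good_add good_mult assms good_cconst)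
  then show ?thesis by simp
qed

lemma good_cong:
  assumes "good N p0 w0 F" "\<And>p w. F p w = G p w"
  shows "good N p0 w0 G"
proof -
  have "F = G" using assms(2) by (intro ext) auto
  then show ?thesis using assms(1) by simp
qed

lemma hasdd_deriv:
  assumes "hasdd N p0 w0 F D" "c < N"
  shows "deriv (\<lambda>t. F p0 (w0(c := t))) (w0 c) = D c p0 w0 w0"
proof -
  have eq: "F p0 (w0(c := t)) - F p0 w0 = D c p0 (w0(c := t)) w0 * (t - w0 c)" for t
  proof -
    have "F p0 (w0(c := t)) - F p0 (w0(c := w0 c)) = (\<Sum>c'<N. D c' p0 (w0(c := t)) w0 * ((w0(c := t)) c' - w0 c'))"
      using assms(1) unfolding hasdd_def by simp
    also have "\<dots> = (\<Sum>c'<N. if c' = c then D c p0 (w0(c := t)) w0 * (t - w0 c) else 0)"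
      by (intro sum.cong refl) auto
    also have "\<dots> = D c p0 (w0(c := t)) w0 * (t - w0 c)" using assms(2) by (simp add: sum.delta)
    finally show ?thesis by simp
  qed
  have lim: "filterlim (\<lambda>t. (p0, w0(c := t), w0)) (F3 p0 w0 w0) (at (w0 c))"
    unfolding filterlim_def le_filter_def eventually_filtermap
  proof (intro allI impI)
    fix Q assume "eventually Q (F3 p0 w0 w0)"
    then obtain P \<delta> where P: "\<delta> > 0" "\<forall>p w v. near P \<delta> p p0 \<and> near P \<delta> w w0 \<and> near P \<delta> v w0 \<longrightarrow> Q (p, w, v)"
      unfolding eventually_F3 by blast
    have "eventually (\<lambda>t. dist t (w0 c) < \<delta>) (at (w0 c))"
      unfolding eventually_at using P(1) by auto
    then show "eventually (\<lambda>t. Q (p0, w0(c := t), w0)) (at (w0 c))"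
    proof (rule eventually_mono)
      fix t assume "dist t (w0 c) < \<delta>"
      then have "near P \<delta> (w0(c := t)) w0" using P(1) by (auto simp: near_def dist_norm)
      moreover have "near P \<delta> p0 p0" "near P \<delta> w0 w0" using P(1) by (auto simp: near_def)
      ultimately show "Q (p0, w0(c := t), w0)" using P(2) by blast
    qed
  qed
  have "((\<lambda>x. D c (fst x) (fst (snd x)) (snd (snd x))) \<longlongrightarrow> D c p0 w0 w0) (F3 p0 w0 w0)"
    using assms unfolding hasdd_def by blast
  from filterlim_compose[OF this lim]
  have "((\<lambda>t. D c p0 (w0(c := t)) w0) \<longlongrightarrow> D c p0 w0 w0) (at (w0 c))"
    by simp
  then have "isCont (\<lambda>t. D c p0 (w0(c := t)) w0) (w0 c)"
    by (simp add: isCont_def)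
  then have "DERIV (\<lambda>t. F p0 (w0(c := t))) (w0 c) :> D c p0 w0 w0"
    unfolding CARAT_DERIV using eq by (intro exI[of _ "\<lambda>t. D c p0 (w0(c := t)) w0"]) auto
  then show ?thesis by (rule DERIV_imp_deriv)
qed


definition nrm :: "nat \<Rightarrow> (nat \<Rightarrow> complex) \<Rightarrow> real" where
  "nrm N u = (\<Sum>i<N. cmod (u i))"

lemma nrm_ge0: "nrm N u \<ge> 0"
  by (simp add: nrm_def sum_nonneg)

lemma nrm_coord: "i < N \<Longrightarrow> cmod (u i) \<le> nrm N u"
  unfolding nrm_def by (rule member_le_sum) auto

lemma nrm_triangle: "nrm N (\<lambda>i. a i - c i) \<le> nrm N (\<lambda>i. a i - b i) + nrm N (\<lambda>i. b i - c i)"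
proof -
  have "nrm N (\<lambda>i. a i - c i) \<le> (\<Sum>i<N. cmod (a i - b i) + cmod (b i - c i))"
    unfolding nrm_def by (intro sum_mono) (metis norm_triangle_ineq diff_add_cancel add_diff_eq)
  then show ?thesis by (simp add: nrm_def sum.distrib)
qed

lemma nrm_sym: "nrm N (\<lambda>i. a i - b i) = nrm N (\<lambda>i. b i - a i)"
  unfolding nrm_def by (simp add: norm_minus_commute)

lemma contraction_fix:
  fixes \<Phi> :: "(nat \<Rightarrow> complex) \<Rightarrow> (nat \<Rightarrow> complex)" and N :: nat and w0 :: "nat \<Rightarrow> complex" and \<rho> :: real
  defines "K \<equiv> {w. (\<forall>i\<ge>N. w i = w0 i) \<and> nrm N (\<lambda>i. w i - w0 i) \<le> \<rho>}"
  assumes \<rho>: "\<rho> \<ge> 0" and into: "\<forall>w\<in>K. \<Phi> w \<in> K"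
    and contr: "\<forall>w\<in>K. \<forall>v\<in>K. nrm N (\<lambda>i. \<Phi> w i - \<Phi> v i) \<le> nrm N (\<lambda>i. w i - v i) / 2"
  shows "\<exists>w\<in>K. \<forall>i<N. \<Phi> w i = w i"
proof -
  define ws where "ws j = (\<Phi> ^^ j) w0" for j
  have ws_Suc: "ws (Suc j) = \<Phi> (ws j)" for j by (simp add: ws_def)
  have w0K: "w0 \<in> K" using \<rho> by (simp add: K_def nrm_def)
  have wsK: "ws j \<in> K" for j
    by (induction j) (simp_all add: ws_def w0K into[rule_format])
  have step: "nrm N (\<lambda>i. ws (Suc j) i - ws j i) \<le> (1/2)^j * \<rho>" for j
  proof (induction j)
    case 0
    have "ws 1 \<in> K" by (rule wsK)
    then show ?case by (simp add: K_def ws_def)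
  next
    case (Suc j)
    have "nrm N (\<lambda>i. ws (Suc (Suc j)) i - ws (Suc j) i) \<le> nrm N (\<lambda>i. ws (Suc j) i - ws j i) / 2"
      unfolding ws_Suc[of "Suc j"] unfolding ws_Suc[of j] using contr wsK
      by (metis ws_Suc)
    also have "\<dots> \<le> (1/2)^(Suc j) * \<rho>" using Suc by simp
    finally show ?case .
  qed
  have coord: "cmod (ws (Suc j) i - ws j i) \<le> (1/2)^j * \<rho>" for j i
  proof (cases "i < N")
    case True
    then show ?thesis using nrm_coord[OF True, of "\<lambda>i. ws (Suc j) i - ws j i"] step[of j] by simp
  next
    case False
    then have "ws (Suc j) i = w0 i" "ws j i = w0 i" using wsK unfolding K_def by auto
    then show ?thesis using \<rho> by simp
  qed
  have summ: "summable (\<lambda>j. ws (Suc j) i - ws j i)" for i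
    by (rule summable_comparison_test'[where N=0, OF summable_mult2[OF summable_geometric]]) (use coord in auto)
  define wl where "wl i = w0 i + suminf (\<lambda>j. ws (Suc j) i - ws j i)" for i
  have lim: "(\<lambda>n. ws n i) \<longlonglongrightarrow> wl i" for i
  proof -
    have "(\<lambda>n. w0 i + (\<Sum>j<n. ws (Suc j) i - ws j i)) \<longlonglongrightarrow> wl i"
      unfolding wl_def by (intro tendsto_intros summable_LIMSEQ summ)
    moreover have "w0 i + (\<Sum>j<n. ws (Suc j) i - ws j i) = ws n i" for n
    proof -
      have "(\<Sum>j<n. ws (Suc j) i - ws j i) = ws n i - ws 0 i" by (rule sum_lessThan_telescope)
      moreover have "ws 0 = w0" by (simp add: ws_def)
      ultimately show ?thesis by simp
    qed
    ultimately show ?thesis by simp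
  qed
  have wlK: "wl \<in> K"
    unfolding K_def
  proof (intro CollectI conjI allI impI)
    fix i assume "N \<le> i"
    then have "ws n i = w0 i" for n using wsK unfolding K_def by auto
    then have "(\<lambda>n. ws n i) \<longlonglongrightarrow> w0 i" by simp
    then show "wl i = w0 i" using lim LIMSEQ_unique by blast
  next
    have "(\<lambda>n. nrm N (\<lambda>i. ws n i - w0 i)) \<longlonglongrightarrow> nrm N (\<lambda>i. wl i - w0 i)"
      unfolding nrm_def by (intro tendsto_intros lim)
    moreover have "nrm N (\<lambda>i. ws n i - w0 i) \<le> \<rho>" for n using wsK unfolding K_def by auto
    ultimately show "nrm N (\<lambda>i. wl i - w0 i) \<le> \<rho>"
      by (intro LIMSEQ_le_const2) auto
  qed
  have fixp: "\<Phi> wl i = wl i" if "i < N" for i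
  proof -
    have l1: "(\<lambda>n. \<Phi> (ws n) i) \<longlonglongrightarrow> wl i"
      using LIMSEQ_Suc[OF lim[of i]] by (simp add: ws_Suc)
    have g0: "(\<lambda>n. nrm N (\<lambda>i. ws n i - wl i) / 2) \<longlonglongrightarrow> nrm N (\<lambda>i. wl i - wl i) / 2"
      unfolding nrm_def by (intro tendsto_intros lim) auto
    have "(\<lambda>n. \<Phi> (ws n) i - \<Phi> wl i) \<longlonglongrightarrow> 0"
    proof (rule Lim_null_comparison)
      show "(\<lambda>n. nrm N (\<lambda>i. ws n i - wl i) / 2) \<longlonglongrightarrow> 0" using g0 by (simp add: nrm_def)
      show "\<forall>\<^sub>F n in sequentially. cmod (\<Phi> (ws n) i - \<Phi> wl i) \<le> nrm N (\<lambda>i. ws n i - wl i) / 2"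
      proof (rule always_eventually, rule allI)
        fix n
        have "cmod (\<Phi> (ws n) i - \<Phi> wl i) \<le> nrm N (\<lambda>i. \<Phi> (ws n) i - \<Phi> wl i)"
          using nrm_coord[OF that, of "\<lambda>i. \<Phi> (ws n) i - \<Phi> wl i"] by simp
        also have "\<dots> \<le> nrm N (\<lambda>i. ws n i - wl i) / 2" using contr wsK wlK by blast
        finally show "cmod (\<Phi> (ws n) i - \<Phi> wl i) \<le> nrm N (\<lambda>i. ws n i - wl i) / 2" .
      qed
    qed
    then have "(\<lambda>n. \<Phi> (ws n) i) \<longlonglongrightarrow> \<Phi> wl i" by (simp add: LIM_zero_iff)
    then show ?thesis using l1 LIMSEQ_unique by blast
  qed
  show ?thesis using wlK fixp by blast
qed


lemma filterlim_fixw: "filterlim (\<lambda>x. (fst x, w0, w0)) (F3 p0 w0 w0) (F3 p0 w0 w0)"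
  unfolding filterlim_def le_filter_def eventually_filtermap
proof (intro allI impI)
  fix Q assume "eventually Q (F3 p0 w0 w0)"
  then obtain P \<delta> where P: "\<delta> > 0" "\<forall>p w v. near P \<delta> p p0 \<and> near P \<delta> w w0 \<and> near P \<delta> v w0 \<longrightarrow> Q (p, w, v)"
    unfolding eventually_F3 by blast
  have nw: "near P \<delta> w0 w0" using P(1) by (simp add: near_def)
  show "eventually (\<lambda>x. Q (fst x, w0, w0)) (F3 p0 w0 w0)"
    unfolding eventually_F3 using P nw by (intro exI[of _ P] exI[of _ \<delta>]) auto
qed

lemma ift:
  fixes F :: "nat \<Rightarrow> (nat \<Rightarrow> complex) \<Rightarrow> (nat \<Rightarrow> complex) \<Rightarrow> complex"
    and D :: "nat \<Rightarrow> nat \<Rightarrow> (nat \<Rightarrow> complex) \<Rightarrow> (nat \<Rightarrow> complex) \<Rightarrow> (nat \<Rightarrow> complex) \<Rightarrow> complex"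
    and A :: "nat \<Rightarrow> nat \<Rightarrow> complex"
  assumes dd: "\<And>r. r < N \<Longrightarrow> hasdd N p0 w0 (F r) (D r)"
    and zero: "\<And>r. r < N \<Longrightarrow> F r p0 w0 = 0"
    and AJ: "\<And>i c. i < N \<Longrightarrow> c < N \<Longrightarrow> (\<Sum>r<N. A i r * D r c p0 w0 w0) = (if i = c then 1 else 0)"
    and JA: "\<And>r j. r < N \<Longrightarrow> j < N \<Longrightarrow> (\<Sum>i<N. D r i p0 w0 w0 * A i j) = (if r = j then 1 else 0)"
  shows "\<exists>P \<delta>. \<delta> > 0 \<and> (\<forall>p. near P \<delta> p p0 \<longrightarrow> (\<exists>w. \<forall>r<N. F r p w = 0))"
proof -
  define B where "B i c x = (if i = c then 1 else 0) - (\<Sum>r<N. A i r * D r c (fst x) (fst (snd x)) (snd (snd x)))"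
    for i c and x :: trip
  have Blim: "((\<lambda>x. B i c x) \<longlongrightarrow> 0) (F3 p0 w0 w0)" if "i < N" "c < N" for i c
  proof -
    have "((\<lambda>x. B i c x) \<longlongrightarrow> (if i = c then 1 else 0) - (\<Sum>r<N. A i r * D r c p0 w0 w0)) (F3 p0 w0 w0)"
      unfolding B_def using dd that by (intro tendsto_intros) (auto simp: hasdd_def)
    then show ?thesis using AJ[OF that] by simp
  qed
  define \<beta> :: real where "\<beta> = 1 / (2 * N + 1)"
  have \<beta>: "\<beta> > 0" "real N * \<beta> \<le> 1/2" by (simp_all add: \<beta>_def field_simps)
  have "eventually (\<lambda>x. \<forall>i\<in>{..<N}. \<forall>c\<in>{..<N}. cmod (B i c x) < \<beta>) (F3 p0 w0 w0)"
  proof (intro eventually_ball_finite ballI finite_lessThan)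
    fix i c assume "i \<in> {..<N}" "c \<in> {..<N}"
    then have "eventually (\<lambda>x. dist (B i c x) 0 < \<beta>) (F3 p0 w0 w0)"
      using Blim \<beta>(1) tendsto_iff by fastforce
    then show "eventually (\<lambda>x. cmod (B i c x) < \<beta>) (F3 p0 w0 w0)" by simp
  qed
  then obtain P1 \<delta>1 where P1: "\<delta>1 > 0"
    "\<And>p w v. near P1 \<delta>1 p p0 \<Longrightarrow> near P1 \<delta>1 w w0 \<Longrightarrow> near P1 \<delta>1 v w0 \<Longrightarrow>
        \<forall>i<N. \<forall>c<N. cmod (B i c (p, w, v)) < \<beta>"
    unfolding eventually_F3 Ball_def lessThan_iff by blast
  define \<rho> where "\<rho> = \<delta>1 / 2"
  have \<rho>: "\<rho> > 0" "\<rho> < \<delta>1" using P1(1) by (simp_all add: \<rho>_def)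
  define G where "G i p = (\<Sum>r<N. A i r * F r p w0)" for i p
  have Glim: "((\<lambda>x. G i (fst x)) \<longlongrightarrow> 0) (F3 p0 w0 w0)" for i
  proof -
    have Fl: "((\<lambda>x. F r (fst x) w0) \<longlongrightarrow> F r p0 w0) (F3 p0 w0 w0)" if "r < N" for r
    proof -
      have "((\<lambda>x. F r (fst x) (fst (snd x))) \<longlongrightarrow> F r p0 w0) (F3 p0 w0 w0)"
        using dd[OF that] by (simp add: hasdd_def)
      from filterlim_compose[OF this filterlim_fixw] show ?thesis by simp
    qed
    have "((\<lambda>x. G i (fst x)) \<longlongrightarrow> (\<Sum>r<N. A i r * F r p0 w0)) (F3 p0 w0 w0)"
      unfolding G_def by (intro tendsto_intros Fl) auto
    then show ?thesis using zero by simp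
  qed
  define \<gamma> :: real where "\<gamma> = \<rho> / (2 * N + 2)"
  have \<gamma>: "\<gamma> > 0" "real N * \<gamma> \<le> \<rho> / 2" using \<rho> by (simp_all add: \<gamma>_def field_simps)
  have "eventually (\<lambda>x. \<forall>i\<in>{..<N}. cmod (G i (fst x)) < \<gamma>) (F3 p0 w0 w0)"
  proof (intro eventually_ball_finite ballI finite_lessThan)
    fix i assume "i \<in> {..<N}"
    have "eventually (\<lambda>x. dist (G i (fst x)) 0 < \<gamma>) (F3 p0 w0 w0)"
      using Glim \<gamma>(1) tendsto_iff by fastforce
    then show "eventually (\<lambda>x. cmod (G i (fst x)) < \<gamma>) (F3 p0 w0 w0)" by simp
  qed
  then obtain P2 \<delta>2 where P2: "\<delta>2 > 0"
    "\<And>p w v. near P2 \<delta>2 p p0 \<Longrightarrow> near P2 \<delta>2 w w0 \<Longrightarrow> near P2 \<delta>2 v w0 \<Longrightarrow> \<forall>i<N. cmod (G i p) < \<gamma>"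
    unfolding eventually_F3 Ball_def lessThan_iff fst_conv by blast
  show ?thesis
  proof (intro exI[of _ "max P1 P2"] exI[of _ "min \<delta>1 \<delta>2"] conjI allI impI)
    show "min \<delta>1 \<delta>2 > 0" using P1(1) P2(1) by simp
    fix p assume hp: "near (max P1 P2) (min \<delta>1 \<delta>2) p p0"
    have hp1: "near P1 \<delta>1 p p0" by (rule near_mono[OF hp]) auto
    have hp2: "near P2 \<delta>2 p p0" by (rule near_mono[OF hp]) auto
    have Gp: "cmod (G i p) < \<gamma>" if "i < N" for i
      using P2(2)[OF hp2, of w0 w0] P2(1) that by (simp add: near_def)
    define K where "K = {w. (\<forall>i\<ge>N. w i = w0 i) \<and> nrm N (\<lambda>i. w i - w0 i) \<le> \<rho>}"
    have Kn: "near P1 \<delta>1 w w0" if "w \<in> K" for w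
      unfolding near_def
    proof (intro allI impI)
      fix i assume "i < P1"
      show "cmod (w i - w0 i) < \<delta>1"
      proof (cases "i < N")
        case True
        then have "cmod (w i - w0 i) \<le> nrm N (\<lambda>i. w i - w0 i)" by (rule nrm_coord)
        then show ?thesis using that \<rho> unfolding K_def by auto
      next
        case False
        then show ?thesis using that P1(1) unfolding K_def by auto
      qed
    qed
    define \<Phi> where "\<Phi> w = (\<lambda>i. if i < N then w i - (\<Sum>r<N. A i r * F r p w) else w0 i)" for w
    have diff\<Phi>: "\<Phi> w i - \<Phi> v i = (\<Sum>c<N. B i c (p, w, v) * (w c - v c))" if "i < N" for w v i
    proof -
      have "\<Phi> w i - \<Phi> v i = (w i - v i) - (\<Sum>r<N. A i r * (F r p w - F r p v))"
        using that by (simp add: \<Phi>_def sum_subtractf right_diff_distrib)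
      also have "\<dots> = (w i - v i) - (\<Sum>r<N. A i r * (\<Sum>c<N. D r c p w v * (w c - v c)))"
        using dd by (simp add: hasdd_def)
      also have "\<dots> = (w i - v i) - (\<Sum>c<N. (\<Sum>r<N. A i r * D r c p w v) * (w c - v c))"
      proof -
        have "(\<Sum>r<N. A i r * (\<Sum>c<N. D r c p w v * (w c - v c))) = (\<Sum>c<N. (\<Sum>r<N. A i r * D r c p w v) * (w c - v c))"
          unfolding sum_distrib_left sum_distrib_right mult.assoc by (rule sum.swap)
        then show ?thesis by simp
      qed
      also have "\<dots> = (\<Sum>c<N. (if i = c then 1 else 0) * (w c - v c)) - (\<Sum>c<N. (\<Sum>r<N. A i r * D r c p w v) * (w c - v c))"
      proof -
        have "(\<Sum>c<N. (if i = c then 1 else 0) * (w c - v c)) = (\<Sum>c<N. if i = c then w c - v c else 0)"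
          by (rule sum.cong) auto
        also have "\<dots> = w i - v i" using that by simp
        finally show ?thesis by simp
      qed
      also have "\<dots> = (\<Sum>c<N. B i c (p, w, v) * (w c - v c))"
        by (simp add: B_def sum_subtractf left_diff_distrib)
      finally show ?thesis .
    qed
    have contr: "nrm N (\<lambda>i. \<Phi> w i - \<Phi> v i) \<le> nrm N (\<lambda>i. w i - v i) / 2" if "w \<in> K" "v \<in> K" for w v
    proof -
      have Bb: "cmod (B i c (p, w, v)) \<le> \<beta>" if "i < N" "c < N" for i c
        using P1(2)[OF hp1 Kn[OF \<open>w \<in> K\<close>] Kn[OF \<open>v \<in> K\<close>]] that by (meson less_imp_le)
      have ci: "cmod (\<Phi> w i - \<Phi> v i) \<le> \<beta> * nrm N (\<lambda>i. w i - v i)" if "i < N" for i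
      proof -
        have "cmod (\<Phi> w i - \<Phi> v i) \<le> (\<Sum>c<N. cmod (B i c (p, w, v) * (w c - v c)))"
          unfolding diff\<Phi>[OF that] by (rule norm_sum)
        also have "\<dots> \<le> (\<Sum>c<N. \<beta> * cmod (w c - v c))"
          by (intro sum_mono) (simp add: norm_mult Bb[OF that] mult_right_mono)
        also have "\<dots> = \<beta> * nrm N (\<lambda>i. w i - v i)" by (simp add: nrm_def sum_distrib_left)
        finally show ?thesis .
      qed
      have "nrm N (\<lambda>i. \<Phi> w i - \<Phi> v i) \<le> (\<Sum>i<N. \<beta> * nrm N (\<lambda>i. w i - v i))"
        unfolding nrm_def[of N "\<lambda>i. \<Phi> w i - \<Phi> v i"] by (intro sum_mono ci) auto
      also have "\<dots> = (real N * \<beta>) * nrm N (\<lambda>i. w i - v i)" by simp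
      also have "\<dots> \<le> (1/2) * nrm N (\<lambda>i. w i - v i)"
        by (intro mult_right_mono \<beta>(2) nrm_ge0)
      finally show ?thesis by simp
    qed
    have w0K: "w0 \<in> K" using \<rho> by (simp add: K_def nrm_def)
    have \<Phi>w0: "nrm N (\<lambda>i. \<Phi> w0 i - w0 i) \<le> \<rho> / 2"
    proof -
      have "nrm N (\<lambda>i. \<Phi> w0 i - w0 i) = (\<Sum>i<N. cmod (G i p))"
        unfolding nrm_def by (intro sum.cong refl) (simp add: \<Phi>_def G_def)
      also have "\<dots> \<le> (\<Sum>i<N. \<gamma>)" by (intro sum_mono less_imp_le Gp) auto
      also have "\<dots> = real N * \<gamma>" by simp
      finally show ?thesis using \<gamma>(2) by simp
    qed
    have into: "\<forall>w\<in>K. \<Phi> w \<in> K"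
    proof
      fix w assume w: "w \<in> K"
      have "nrm N (\<lambda>i. \<Phi> w i - w0 i) \<le> nrm N (\<lambda>i. \<Phi> w i - \<Phi> w0 i) + nrm N (\<lambda>i. \<Phi> w0 i - w0 i)"
        by (rule nrm_triangle)
      also have "\<dots> \<le> nrm N (\<lambda>i. w i - w0 i) / 2 + \<rho> / 2"
        using contr[OF w w0K] \<Phi>w0 by simp
      also have "\<dots> \<le> \<rho>" using w unfolding K_def by simp
      finally show "\<Phi> w \<in> K" unfolding K_def by (simp add: \<Phi>_def)
    qed
    obtain wl where wl: "wl \<in> K" "\<And>i. i < N \<Longrightarrow> \<Phi> wl i = wl i"
      using contraction_fix[of \<rho> N w0 \<Phi>] \<rho>(1) into contr unfolding K_def by force
    have AF: "(\<Sum>r<N. A i r * F r p wl) = 0" if "i < N" for i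
      using wl(2)[OF that] that by (simp add: \<Phi>_def)
    show "\<exists>w. \<forall>r<N. F r p w = 0"
    proof (intro exI allI impI)
      fix r assume r: "r < N"
      have "F r p wl = (\<Sum>j<N. (if r = j then 1 else 0) * F j p wl)"
      proof -
        have "(\<Sum>j<N. (if r = j then 1 else 0) * F j p wl) = (\<Sum>j<N. if r = j then F j p wl else 0)"
          by (rule sum.cong) auto
        then show ?thesis using r by simp
      qed
      also have "\<dots> = (\<Sum>j<N. (\<Sum>i<N. D r i p0 w0 w0 * A i j) * F j p wl)"
        using JA[OF r] by simp
      also have "\<dots> = (\<Sum>i<N. D r i p0 w0 w0 * (\<Sum>j<N. A i j * F j p wl))"
        unfolding sum_distrib_left sum_distrib_right mult.assoc by (rule sum.swap)
      also have "\<dots> = 0" using AF by simp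
      finally show "F r p wl = 0" .
    qed
  qed
qed


lemma lookup_cscale: "Poly_Mapping.lookup (cscale c f) m = c * Poly_Mapping.lookup f m"
  by (simp add: cscale_def mult_map_scale_conv_mult[symmetric] Poly_Mapping.map.rep_eq when_def)

lemma keys_cscale: "Poly_Mapping.keys (cscale c f) \<subseteq> Poly_Mapping.keys f"
  by (auto simp: in_keys_iff lookup_cscale)

lemma vs_cscale: "vector_space (cscale :: 'a::field \<Rightarrow> 'a mpoly \<Rightarrow> 'a mpoly)"
  by unfold_locales (auto intro!: poly_mapping_eqI simp: lookup_cscale lookup_add algebra_simps)

lemma cscale_single: "cscale c (Poly_Mapping.single m 1) = Poly_Mapping.single m c"
  by (simp add: cscale_def mult_single)

definition restr :: "(nat \<Rightarrow>\<^sub>0 nat) set \<Rightarrow> 'a::zero mpoly \<Rightarrow> 'a mpoly" where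
  "restr T f = Abs_poly_mapping (\<lambda>m. if m \<in> T then Poly_Mapping.lookup f m else 0)"

lemma lookup_restr: "Poly_Mapping.lookup (restr T f) m = (if m \<in> T then Poly_Mapping.lookup f m else 0)"
proof -
  have "finite {m. (if m \<in> T then Poly_Mapping.lookup f m else 0) \<noteq> 0}"
    by (rule finite_subset[OF _ finite_keys[of f]]) (auto simp: in_keys_iff)
  then show ?thesis by (simp add: restr_def)
qed

lemma keys_restr: "Poly_Mapping.keys (restr T f) \<subseteq> T"
  by (auto simp: in_keys_iff lookup_restr split: if_splits)

lemma dim_bound:
  fixes V :: "'a::field mpoly set"
  assumes sub: "module.subspace (cscale :: 'a \<Rightarrow> 'a mpoly \<Rightarrow> 'a mpoly) V"
    and kern: "\<And>f. f \<in> V \<Longrightarrow> (\<forall>m\<in>T. Poly_Mapping.lookup f m = 0) \<Longrightarrow> f = 0"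
    and finT: "finite T"
  shows "vector_space.dim (cscale :: 'a \<Rightarrow> 'a mpoly \<Rightarrow> 'a mpoly) V \<le> card T"
proof -
  interpret vs: vector_space "cscale :: 'a \<Rightarrow> 'a mpoly \<Rightarrow> 'a mpoly" by (rule vs_cscale)
  interpret mh: module_hom "cscale :: 'a \<Rightarrow> 'a mpoly \<Rightarrow> 'a mpoly" "cscale :: 'a \<Rightarrow> 'a mpoly \<Rightarrow> 'a mpoly" "restr T"
    by unfold_locales (auto intro!: poly_mapping_eqI simp: lookup_restr lookup_cscale lookup_add)
  obtain B where B: "B \<subseteq> V" "vs.independent B" "V \<subseteq> vs.span B" "card B = vs.dim V"
    by (rule vs.basis_exists)
  have spanB: "vs.span B = V" using B sub by (intro vs.span_subspace) auto
  have inj: "inj_on (restr T) V"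
  proof
    fix x y assume xy: "x \<in> V" "y \<in> V" "restr T x = restr T y"
    have "x - y \<in> V" using xy sub by (simp add: vs.subspace_diff)
    moreover have "\<forall>m\<in>T. Poly_Mapping.lookup (x - y) m = 0"
    proof
      fix m assume "m \<in> T"
      have "Poly_Mapping.lookup (restr T x) m = Poly_Mapping.lookup (restr T y) m" using xy(3) by simp
      then show "Poly_Mapping.lookup (x - y) m = 0" using \<open>m \<in> T\<close> by (simp add: lookup_restr lookup_minus)
    qed
    ultimately have "x - y = 0" by (rule kern)
    then show "x = y" by simp
  qed
  have indep: "vs.independent (restr T ` B)"
    using mh.independent_injective_image[OF B(2)] inj spanB by simp
  have W: "restr T ` B \<subseteq> vs.span ((\<lambda>m. Poly_Mapping.single m 1) ` T)"
  proof
    fix g assume "g \<in> restr T ` B"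
    then obtain f where g: "g = restr T f" by blast
    have "g = (\<Sum>m\<in>Poly_Mapping.keys g. Poly_Mapping.single m (Poly_Mapping.lookup g m))"
      by (rule poly_mapping_sum_single)
    also have "\<dots> = (\<Sum>m\<in>Poly_Mapping.keys g. cscale (Poly_Mapping.lookup g m) (Poly_Mapping.single m 1))"
      by (simp add: cscale_single)
    also have "\<dots> \<in> vs.span ((\<lambda>m. Poly_Mapping.single m 1) ` T)"
    proof (intro vs.span_sum vs.span_scale vs.span_base)
      fix m assume "m \<in> Poly_Mapping.keys g"
      then have "m \<in> T" using keys_restr g by blast
      then show "Poly_Mapping.single m 1 \<in> (\<lambda>m. Poly_Mapping.single m 1) ` T" by blast
    qed
    finally show "g \<in> vs.span ((\<lambda>m. Poly_Mapping.single m 1) ` T)" .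
  qed
  have "card (restr T ` B) \<le> card ((\<lambda>m. Poly_Mapping.single m (1::'a)) ` T)"
    using vs.independent_span_bound[OF _ indep W] finT by simp
  also have "\<dots> \<le> card T" using finT by (rule card_image_le)
  finally have c1: "card (restr T ` B) \<le> card T" .
  have "inj_on (restr T) B" using inj B(1) inj_on_subset by blast
  then have "card (restr T ` B) = card B" by (rule card_image)
  then show ?thesis using c1 B(4) by simp
qed

definition mons :: "nat \<Rightarrow> nat \<Rightarrow> (nat \<Rightarrow>\<^sub>0 nat) set" where
  "mons n d = {m. Poly_Mapping.keys m \<subseteq> {..<n} \<and> tdeg m \<le> d}"

lemma tdeg_over:
  assumes "finite U" "Poly_Mapping.keys m \<subseteq> U"
  shows "tdeg m = (\<Sum>i\<in>U. Poly_Mapping.lookup m i)"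
  unfolding tdeg_def by (rule sum.mono_neutral_left) (use assms in \<open>auto simp: in_keys_iff\<close>)

lemma tdeg_add: "tdeg (a + b) = tdeg a + tdeg b"
proof -
  let ?U = "Poly_Mapping.keys a \<union> Poly_Mapping.keys b"
  have "tdeg (a + b) = (\<Sum>i\<in>?U. Poly_Mapping.lookup (a + b) i)"
    by (rule tdeg_over) (auto simp: keys_add_nat)
  also have "\<dots> = (\<Sum>i\<in>?U. Poly_Mapping.lookup a i) + (\<Sum>i\<in>?U. Poly_Mapping.lookup b i)"
    by (simp add: lookup_add sum.distrib)
  also have "\<dots> = tdeg a + tdeg b"
    by (subst (1 2) tdeg_over[where U="?U"]) auto
  finally show ?thesis .
qed

lemma tdeg_single: "tdeg (Poly_Mapping.single v e) = e"
  by (cases "e = 0") (auto simp: tdeg_def)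

lemma mons_finite_card: "finite (mons n d) \<and> card (mons n d) = (n + d) choose d"
proof (induction n arbitrary: d)
  case 0
  have "mons 0 d = {0}" by (auto simp: mons_def tdeg_def)
  then show ?case by simp
next
  case (Suc n)
  define A where "A e = (\<lambda>m'. m' + Poly_Mapping.single n e) ` mons n (d - e)" for e
  have split: "mons (Suc n) d = (\<Union>e\<in>{..d}. A e)"
  proof (intro equalityI subsetI)
    fix m assume m: "m \<in> mons (Suc n) d"
    define e where "e = Poly_Mapping.lookup m n"
    define m' where "m' = Poly_Mapping.update n 0 m"
    have meq: "m = m' + Poly_Mapping.single n e"
      by (rule poly_mapping_eqI) (auto simp: m'_def e_def lookup_update lookup_add lookup_single when_def)
    have td: "tdeg m = tdeg m' + e" by (subst meq) (simp add: tdeg_add tdeg_single)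
    have "e \<le> d" using m td by (simp add: mons_def)
    moreover have "Poly_Mapping.keys m' \<subseteq> {..<n}"
      using m by (auto simp: mons_def m'_def keys_update less_Suc_eq)
    moreover have "tdeg m' \<le> d - e"
    proof -
      have "tdeg m \<le> d" using m by (simp add: mons_def)
      then show ?thesis using td by linarith
    qed
    ultimately show "m \<in> (\<Union>e\<in>{..d}. A e)"
      unfolding A_def mons_def using meq by blast
  next
    fix m assume "m \<in> (\<Union>e\<in>{..d}. A e)"
    then obtain e m' where em: "e \<le> d" "m' \<in> mons n (d - e)" "m = m' + Poly_Mapping.single n e"
      by (auto simp: A_def)
    have "Poly_Mapping.keys m \<subseteq> {..<Suc n}"
      using em by (auto simp: mons_def keys_add_nat split: if_splits)
    moreover have "tdeg m \<le> d"
    proof -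
      have "tdeg m' \<le> d - e" using em(2) by (simp add: mons_def)
      then show ?thesis using em(1,3) by (simp add: tdeg_add tdeg_single)
    qed
    ultimately show "m \<in> mons (Suc n) d" by (simp add: mons_def)
  qed
  have injA: "inj_on (\<lambda>m'. m' + Poly_Mapping.single n e) (mons n (d - e))" for e
    by (rule inj_onI) (simp add: add_right_imp_eq)
  have cardA: "finite (A e) \<and> card (A e) = (n + (d - e)) choose (d - e)" for e
    using Suc.IH[of "d - e"] card_image[OF injA[of e]] by (simp add: A_def)
  have disj: "A e1 \<inter> A e2 = {}" if "e1 \<noteq> e2" for e1 e2
  proof -
    have "Poly_Mapping.lookup m n = e" if "m \<in> A e" for m e
    proof -
      from that obtain m' where "m' \<in> mons n (d - e)" "m = m' + Poly_Mapping.single n e" by (auto simp: A_def)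
      moreover then have "Poly_Mapping.lookup m' n = 0"
        unfolding mons_def by (metis (mono_tags, lifting) in_keys_iff lessThan_iff mem_Collect_eq order_less_irrefl subsetD)
      ultimately show ?thesis by (simp add: lookup_add)
    qed
    then show ?thesis using that by blast
  qed
  have "card (mons (Suc n) d) = (\<Sum>e\<in>{..d}. card (A e))"
    unfolding split by (rule card_UN_disjoint) (use cardA disj in auto)
  also have "\<dots> = (\<Sum>e\<in>{..d}. (n + (d - e)) choose (d - e))" using cardA by simp
  also have "\<dots> = (\<Sum>j\<in>{..d}. (n + j) choose j)"
    by (rule sum.reindex_bij_witness[of _ "\<lambda>j. d - j" "\<lambda>j. d - j"]) auto
  also have "\<dots> = (Suc n + d) choose d" by (simp add: sum_choose_lower)
  finally show ?case using split cardA by simp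
qed


lemma qeval_tendsto: "((\<lambda>x. qeval a (fst x)) \<longlongrightarrow> qeval a p0) (F3 p0 b c)"
  unfolding qeval_def mono_eval_def by (intro tendsto_intros tendsto_F3_p)

lemma kval_tendsto:
  assumes "kdefined c p0"
  shows "((\<lambda>x. kval c (fst x)) \<longlongrightarrow> kval c p0) (F3 p0 b' c')"
proof -
  obtain a b where ab: "c = Fract a b" "qeval b p0 \<noteq> 0" using assms by (auto simp: kdefined_def)
  have lb: "((\<lambda>x. qeval b (fst x)) \<longlongrightarrow> qeval b p0) (F3 p0 b' c')" by (rule qeval_tendsto)
  have ev: "eventually (\<lambda>x. qeval b (fst x) \<noteq> 0) (F3 p0 b' c')"
    using tendsto_imp_eventually_ne[OF lb ab(2)] .
  have "((\<lambda>x. qeval a (fst x) / qeval b (fst x)) \<longlongrightarrow> qeval a p0 / qeval b p0) (F3 p0 b' c')"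
    by (intro tendsto_intros qeval_tendsto ab(2))
  then have "((\<lambda>x. qeval a (fst x) / qeval b (fst x)) \<longlongrightarrow> kval c p0) (F3 p0 b' c')"
    using kval_eq[OF ab] by simp
  then show ?thesis
    by (rule Lim_transform_eventually) (use ev in \<open>auto elim!: eventually_mono simp: kval_eq[OF ab(1)]\<close>)
qed

lemma good_mono_yvec:
  assumes "Poly_Mapping.keys m \<subseteq> {..<n}" "j < k" "k * n \<le> N"
  shows "good N p0 w0 (\<lambda>p w. mono_eval m (yvec n w j))"
proof (rule good_cong)
  show "good N p0 w0 (\<lambda>p w. \<Prod>i\<in>Poly_Mapping.keys m. w (j * n + i) ^ Poly_Mapping.lookup m i)"
  proof (intro good_prod good_power good_var)
    fix i assume "i \<in> Poly_Mapping.keys m"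
    then have "i < n" using assms(1) by auto
    then have "j * n + i < Suc j * n" by simp
    also have "\<dots> \<le> k * n" using assms(2) by (intro mult_right_mono) auto
    finally show "j * n + i < N" using assms(3) by simp
  qed
  fix p w
  show "(\<Prod>i\<in>Poly_Mapping.keys m. w (j * n + i) ^ Poly_Mapping.lookup m i) = mono_eval m (yvec n w j)"
    unfolding mono_eval_def yvec_def using assms(1) by (intro prod.cong refl) auto
qed

lemma sys_good:
  assumes "length hs = n" "\<forall>h\<in>set hs. h \<in> mpolys n" "\<forall>h\<in>set hs. coeffs_defined h p0"
    "length sel = k" "\<forall>m\<in>set sel. Poly_Mapping.keys m \<subseteq> {..<n}" "r < k * n + k * k"
  shows "good (k * n + k * k) p0 w0 (\<lambda>p w. sysG n k (map (\<lambda>h. spec h p) hs) sel r w)"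
proof (cases "r < k * n")
  case True
  define j where "j = r div n"
  define i where "i = r mod n"
  have n0: "n > 0" using True by (cases n) auto
  have i: "i < n" using n0 by (simp add: i_def)
  have j: "j < k" using True by (simp add: j_def less_mult_imp_div_less)
  define h where "h = hs ! i"
  have h: "h \<in> set hs" using i assms(1) by (simp add: h_def)
  have eq: "sysG n k (map (\<lambda>h. spec h p) hs) sel r w =
      (\<Sum>m\<in>Poly_Mapping.keys h. kval (Poly_Mapping.lookup h m) p * mono_eval m (yvec n w j))" for p w
    using True i assms(1) by (simp add: sysG_def meval_spec ev_def h_def i_def j_def)
  show ?thesis
  proof (rule good_cong[OF _ eq[symmetric]], intro good_sum good_mult)
    fix m assume m: "m \<in> Poly_Mapping.keys h"
    show "good (k * n + k * k) p0 w0 (\<lambda>p w. kval (Poly_Mapping.lookup h m) p)"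
      using assms(3) h m by (intro good_const kval_tendsto) (auto simp: coeffs_defined_def)
    show "good (k * n + k * k) p0 w0 (\<lambda>p w. mono_eval m (yvec n w j))"
      using assms(2) h m j by (intro good_mono_yvec) (auto simp: mpolys_def)
  qed
next
  case False
  define a where "a = (r - k * n) div k"
  define b where "b = (r - k * n) mod k"
  have k0: "k > 0" using False assms(6) by (cases k) auto
  have a: "a < k" using False assms(6) by (simp add: a_def less_mult_imp_div_less)
  have b: "b < k" using k0 by (simp add: b_def)
  have eq: "sysG n k (map (\<lambda>h. spec h p) hs) sel r w =
      (\<Sum>c<k. w (k * n + a * k + c) * mono_eval (sel ! b) (yvec n w c)) - (if a = b then 1 else 0)" for p w
    using False by (simp add: sysG_def a_def b_def Let_def)
  show ?thesis
  proof (rule good_cong[OF _ eq[symmetric]], intro good_diff good_sum good_mult good_cconst)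
    fix c assume c: "c \<in> {..<k}"
    have "k * n + a * k + c < k * n + (a + 1) * k" using c by simp
    also have "\<dots> \<le> k * n + k * k" using a by (intro add_left_mono mult_right_mono) auto
    finally show "good (k * n + k * k) p0 w0 (\<lambda>p w. w (k * n + a * k + c))" by (rule good_var)
    have "sel ! b \<in> set sel" using b assms(4) by simp
    then show "good (k * n + k * k) p0 w0 (\<lambda>p w. mono_eval (sel ! b) (yvec n w c))"
      using assms(5) c by (intro good_mono_yvec[where k=k]) auto
  qed
qed

lemma jac_inv:
  fixes f :: "nat \<times> nat \<Rightarrow> complex"
  assumes "invertible_mat (Matrix.mat N N f)"
  shows "\<exists>A. (\<forall>i<N. \<forall>c<N. (\<Sum>r<N. A i r * f (r, c)) = (if i = c then 1 else 0)) \<and>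
             (\<forall>r<N. \<forall>j<N. (\<Sum>i<N. f (r, i) * A i j) = (if r = j then 1 else 0))"
proof -
  let ?J = "Matrix.mat N N f"
  obtain B where B: "inverts_mat ?J B" "inverts_mat B ?J"
    using assms by (auto simp: invertible_mat_def)
  have JB: "?J * B = 1\<^sub>m N" using B(1) by (simp add: inverts_mat_def)
  have BJ: "B * ?J = 1\<^sub>m (dim_row B)" using B(2) by (simp add: inverts_mat_def)
  have dc: "dim_col B = N" using arg_cong[OF JB, of dim_col] by simp
  have dr: "dim_row B = N" using arg_cong[OF BJ, of dim_col] by simp
  show ?thesis
  proof (intro exI[of _ "\<lambda>i j. B $$ (i, j)"] conjI allI impI)
    fix i c assume ic: "i < N" "c < N"
    have "(B * ?J) $$ (i, c) = (if i = c then 1 else 0)" using BJ ic dr by simp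
    moreover have "(B * ?J) $$ (i, c) = (\<Sum>r<N. B $$ (i, r) * f (r, c))"
      using ic dr dc by (simp add: scalar_prod_def atLeast0LessThan)
    ultimately show "(\<Sum>r<N. B $$ (i, r) * f (r, c)) = (if i = c then 1 else 0)" by simp
  next
    fix r j assume rj: "r < N" "j < N"
    have "(?J * B) $$ (r, j) = (if r = j then 1 else 0)" using JB rj by simp
    moreover have "(?J * B) $$ (r, j) = (\<Sum>i<N. f (r, i) * B $$ (i, j))"
      using rj dr dc by (simp add: scalar_prod_def atLeast0LessThan)
    ultimately show "(\<Sum>i<N. f (r, i) * B $$ (i, j)) = (if r = j then 1 else 0)" by simp
  qed
qed


lemma cin_mult:
  fixes f g :: "(nat \<Rightarrow>\<^sub>0 nat) \<Rightarrow>\<^sub>0 'a::comm_ring_1"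
  assumes S: "phom \<phi> S" and f: "cin f S" and g: "cin g S"
  shows "cin (f * g) S"
proof -
  have Sm: "\<And>a b. a \<in> S \<Longrightarrow> b \<in> S \<Longrightarrow> a * b \<in> S" using S by (auto simp: phom_def)
  have fS: "\<And>a. Poly_Mapping.lookup f a \<in> S" and gS: "\<And>a. Poly_Mapping.lookup g a \<in> S"
    using f g by (auto simp: cin_def)
  have "f * g = (\<Sum>a\<in>Poly_Mapping.keys f. Poly_Mapping.single a (Poly_Mapping.lookup f a)) *
                (\<Sum>b\<in>Poly_Mapping.keys g. Poly_Mapping.single b (Poly_Mapping.lookup g b))"
    by (subst (1) poly_mapping_sum_single[of f], subst (1) poly_mapping_sum_single[of g]) (rule refl)
  also have "\<dots> = (\<Sum>a\<in>Poly_Mapping.keys f. \<Sum>b\<in>Poly_Mapping.keys g.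
      Poly_Mapping.single (a + b) (Poly_Mapping.lookup f a * Poly_Mapping.lookup g b))"
    by (simp add: sum_distrib_left sum_distrib_right sum.swap[of _ "Poly_Mapping.keys g"] mult_single)
  finally have fg: "f * g = \<dots>" .
  show ?thesis unfolding fg
    by (intro cin_sum[OF S] cin_single[OF S] Sm fS gS)
qed

lemma qeval_prod: "qeval (\<Prod>x\<in>A. F x) p = (\<Prod>x\<in>A. qeval (F x) p)"
  by (induction A rule: infinite_finite_induct) (simp_all add: qeval_mult)

lemma mpolys_zero: "0 \<in> mpolys n"
  by (simp add: mpolys_def)

lemma mpolys_add:
  assumes "f \<in> mpolys n" "g \<in> mpolys n"
  shows "f + g \<in> mpolys n"
  unfolding mpolys_def
proof (intro CollectI ballI)
  fix m assume "m \<in> Poly_Mapping.keys (f + g)"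
  then have "m \<in> Poly_Mapping.keys f \<or> m \<in> Poly_Mapping.keys g" using keys_add[of f g] by auto
  then show "Poly_Mapping.keys m \<subseteq> {..<n}" using assms by (auto simp: mpolys_def)
qed

lemma mpolys_mult:
  assumes "f \<in> mpolys n" "g \<in> mpolys n"
  shows "f * g \<in> mpolys n"
  unfolding mpolys_def
proof (intro CollectI ballI)
  fix m assume "m \<in> Poly_Mapping.keys (f * g)"
  then obtain a b where ab: "m = a + b" "a \<in> Poly_Mapping.keys f" "b \<in> Poly_Mapping.keys g"
    using keys_mult by blast
  then show "Poly_Mapping.keys m \<subseteq> {..<n}" using assms by (auto simp: mpolys_def keys_add_nat)
qed

lemma mpolys_cscale:
  assumes "f \<in> mpolys n"
  shows "cscale c f \<in> mpolys n"
  unfolding mpolys_def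
proof (intro CollectI ballI)
  fix m assume "m \<in> Poly_Mapping.keys (cscale c f)"
  then have "m \<in> Poly_Mapping.keys f" using keys_cscale[of c f] by auto
  then show "Poly_Mapping.keys m \<subseteq> {..<n}" using assms by (auto simp: mpolys_def)
qed

lemma mpolys_sum: "(\<And>i. i \<in> A \<Longrightarrow> F i \<in> mpolys n) \<Longrightarrow> (\<Sum>i\<in>A. F i) \<in> mpolys n"
  by (induction A rule: infinite_finite_induct) (auto intro: mpolys_add mpolys_zero)

lemma ideal_mpolys:
  assumes "\<forall>h\<in>set hs. h \<in> mpolys n" "f \<in> ideal_gen n hs"
  shows "f \<in> mpolys n"
  using assms by (auto simp: ideal_gen_def intro!: mpolys_sum mpolys_mult)

lemma ideal_le_subspace:
  "module.subspace (cscale :: kfield \<Rightarrow> kfield mpoly \<Rightarrow> kfield mpoly) (ideal_le (ideal_gen n hs) d)"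
proof -
  interpret vs: vector_space "cscale :: kfield \<Rightarrow> kfield mpoly \<Rightarrow> kfield mpoly" by (rule vs_cscale)
  show ?thesis
    unfolding vs.subspace_def
  proof (intro conjI ballI allI)
    have "(0::kfield mpoly) \<in> ideal_gen n hs" unfolding ideal_gen_def
      by (rule CollectI, rule exI[of _ "\<lambda>i. 0"]) (simp add: mpolys_zero)
    then show "0 \<in> ideal_le (ideal_gen n hs) d" by (simp add: ideal_le_def)
  next
    fix x y assume x: "x \<in> ideal_le (ideal_gen n hs) d" and y: "y \<in> ideal_le (ideal_gen n hs) d"
    obtain g where g: "x = (\<Sum>i<length hs. g i * hs ! i)" "\<forall>i<length hs. g i \<in> mpolys n"
      using x by (auto simp: ideal_le_def ideal_gen_def)
    obtain g' where g': "y = (\<Sum>i<length hs. g' i * hs ! i)" "\<forall>i<length hs. g' i \<in> mpolys n"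
      using y by (auto simp: ideal_le_def ideal_gen_def)
    have "x + y = (\<Sum>i<length hs. (g i + g' i) * hs ! i)"
      using g g' by (simp add: distrib_right sum.distrib)
    moreover have "\<forall>i<length hs. g i + g' i \<in> mpolys n" using g g' by (simp add: mpolys_add)
    ultimately have "x + y \<in> ideal_gen n hs" unfolding ideal_gen_def
      by (intro CollectI exI[of _ "\<lambda>i. g i + g' i"]) simp
    moreover have "\<forall>m\<in>Poly_Mapping.keys (x + y). tdeg m \<le> d"
    proof
      fix m assume "m \<in> Poly_Mapping.keys (x + y)"
      then have "m \<in> Poly_Mapping.keys x \<or> m \<in> Poly_Mapping.keys y" using keys_add[of x y] by auto
      then show "tdeg m \<le> d" using x y by (auto simp: ideal_le_def)
    qed
    ultimately show "x + y \<in> ideal_le (ideal_gen n hs) d" by (simp add: ideal_le_def)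
  next
    fix c x assume x: "x \<in> ideal_le (ideal_gen n hs) d"
    obtain g where g: "x = (\<Sum>i<length hs. g i * hs ! i)" "\<forall>i<length hs. g i \<in> mpolys n"
      using x by (auto simp: ideal_le_def ideal_gen_def)
    have "cscale c x = (\<Sum>i<length hs. cscale c (g i) * hs ! i)"
      using g by (simp add: cscale_def sum_distrib_left mult.assoc)
    moreover have "\<forall>i<length hs. cscale c (g i) \<in> mpolys n" using g by (simp add: mpolys_cscale)
    ultimately have "cscale c x \<in> ideal_gen n hs" unfolding ideal_gen_def
      by (intro CollectI exI[of _ "\<lambda>i. cscale c (g i)"]) simp
    moreover have "\<forall>m\<in>Poly_Mapping.keys (cscale c x). tdeg m \<le> d"
    proof
      fix m assume "m \<in> Poly_Mapping.keys (cscale c x)"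
      then have "m \<in> Poly_Mapping.keys x" using keys_cscale[of c x] by auto
      then show "tdeg m \<le> d" using x by (auto simp: ideal_le_def)
    qed
    ultimately show "cscale c x \<in> ideal_le (ideal_gen n hs) d" by (simp add: ideal_le_def)
  qed
qed

lemma sum_sel:
  assumes "distinct sel" "length sel = k"
  shows "(\<Sum>m\<in>set sel. F m) = (\<Sum>b<k. F (sel ! b))"
proof -
  have "set sel = (\<lambda>b. sel ! b) ` {..<k}" using assms(2) by (auto simp: set_conv_nth)
  moreover have "inj_on (\<lambda>b. sel ! b) {..<k}" using assms by (intro inj_on_nth) auto
  ultimately show ?thesis by (simp add: sum.reindex)
qed


lemma kern:
  fixes hs :: "kfield mpoly list" and sel :: "(nat \<Rightarrow>\<^sub>0 nat) list" and pstar :: "nat \<Rightarrow> complex"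
  assumes len: "length hs = n"
    and hsm: "\<forall>h\<in>set hs. h \<in> mpolys n"
    and hdef: "\<forall>h\<in>set hs. coeffs_defined h pstar"
    and lsel: "length sel = k" and dsel: "distinct sel"
    and dP: "\<delta> > 0"
    and solv: "\<forall>p. near P \<delta> p pstar \<longrightarrow> (\<exists>w. \<forall>r<k*n + k*k. sysG n k (map (\<lambda>h. spec h p) hs) sel r w = 0)"
    and fI: "f \<in> ideal_gen n hs"
    and fk: "Poly_Mapping.keys f \<subseteq> set sel"
  shows "f = 0"
proof (rule ccontr)
  assume "f \<noteq> 0"
  then obtain m0 where m0: "m0 \<in> Poly_Mapping.keys f" by (metis all_not_in_conv keys_eq_empty)
  then obtain b0 where b0: "b0 < k" "sel ! b0 = m0" using fk lsel by (metis in_set_conv_nth subsetD)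
  define c0 where "c0 = Poly_Mapping.lookup f m0"
  have c0nz: "c0 \<noteq> 0" using m0 by (simp add: c0_def in_keys_iff)
  obtain g where fg: "f = (\<Sum>i<length hs. g i * hs ! i)" and gm: "\<forall>i<length hs. g i \<in> mpolys n"
    using fI by (auto simp: ideal_gen_def)
  define dn1 :: "kfield mpoly \<Rightarrow> (nat \<Rightarrow>\<^sub>0 nat) \<Rightarrow> qpoly" where "dn1 h m = (SOME b. \<exists>a. Poly_Mapping.lookup h m = Fract a b \<and> qeval b pstar \<noteq> 0)" for h m
  have dn1: "\<exists>a. Poly_Mapping.lookup h m = Fract a (dn1 h m) \<and> qeval (dn1 h m) pstar \<noteq> 0"
    if "h \<in> set hs" "m \<in> Poly_Mapping.keys h" for h m
  proof -
    have "\<exists>b a. Poly_Mapping.lookup h m = Fract a b \<and> qeval b pstar \<noteq> 0"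
      using hdef that unfolding coeffs_defined_def kdefined_def by blast
    then show ?thesis unfolding dn1_def by (metis (mono_tags, lifting) someI_ex)
  qed
  define dn2 :: "nat \<Rightarrow> (nat \<Rightarrow>\<^sub>0 nat) \<Rightarrow> qpoly" where "dn2 i m = (SOME b. \<exists>a. Poly_Mapping.lookup (g i) m = Fract a b \<and> b \<noteq> 0)" for i m
  have dn2: "\<exists>a. Poly_Mapping.lookup (g i) m = Fract a (dn2 i m) \<and> dn2 i m \<noteq> 0" for i m
  proof -
    obtain a b where "Poly_Mapping.lookup (g i) m = Fract a b" "b \<noteq> 0" by (rule Fract_cases)
    then have "\<exists>b a. Poly_Mapping.lookup (g i) m = Fract a b \<and> b \<noteq> 0" by blast
    then show ?thesis unfolding dn2_def by (metis (mono_tags, lifting) someI_ex)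
  qed
  obtain a0 b0' where ab0: "c0 = Fract a0 b0'" "b0' \<noteq> 0" by (rule Fract_cases)
  have a0: "a0 \<noteq> 0" using ab0 c0nz by (auto simp: fract_collapse)
  define Q where "Q = a0 * b0' * (\<Prod>h\<in>set hs. \<Prod>m\<in>Poly_Mapping.keys h. dn1 h m) *
      (\<Prod>i<length hs. \<Prod>m\<in>Poly_Mapping.keys (g i). dn2 i m)"
  have dn1nz: "dn1 h m \<noteq> 0" if "h \<in> set hs" "m \<in> Poly_Mapping.keys h" for h m
    using dn1[OF that] by auto
  have dn2nz: "dn2 i m \<noteq> 0" for i m using dn2[of i m] by auto
  have Qnz: "Q \<noteq> 0" unfolding Q_def using a0 ab0(2) dn1nz dn2nz by (simp add: prod_zero_iff)
  obtain p where p: "\<forall>i. cmod (p i - pstar i) < \<delta>" "qeval Q p \<noteq> 0"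
    using qpoly_box_nonzero[OF Qnz dP] by blast
  have "near P \<delta> p pstar" using p(1) by (simp add: near_def)
  then obtain w where w: "\<forall>r<k*n + k*k. sysG n k (map (\<lambda>h. spec h p) hs) sel r w = 0"
    using solv by blast
  have qa0: "qeval a0 p \<noteq> 0" and qb0: "qeval b0' p \<noteq> 0"
    and q1: "\<forall>h\<in>set hs. \<forall>m\<in>Poly_Mapping.keys h. qeval (dn1 h m) p \<noteq> 0"
    and q2: "\<forall>i<length hs. \<forall>m\<in>Poly_Mapping.keys (g i). qeval (dn2 i m) p \<noteq> 0"
    using p(2) unfolding Q_def by (simp_all add: qeval_mult qeval_prod prod_zero_iff)
  define \<phi> where "\<phi> = (\<lambda>c. kval c p)"
  have ph: "phom \<phi> (Dp p)" unfolding \<phi>_def by (rule phom_kval)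
  have zD: "0 \<in> Dp p" using ph by (simp add: phom_def)
  have cinh: "cin h (Dp p)" if "h \<in> set hs" for h
    unfolding cin_def
  proof
    fix m
    show "Poly_Mapping.lookup h m \<in> Dp p"
    proof (cases "m \<in> Poly_Mapping.keys h")
      case True
      then show ?thesis using dn1[OF that True] q1 that by (auto simp: Dp_def kdefined_def)
    next
      case False
      then show ?thesis using zD by (simp add: in_keys_iff)
    qed
  qed
  have cing: "cin (g i) (Dp p)" if "i < length hs" for i
    unfolding cin_def
  proof
    fix m
    show "Poly_Mapping.lookup (g i) m \<in> Dp p"
    proof (cases "m \<in> Poly_Mapping.keys (g i)")
      case True
      then show ?thesis using dn2[of i m] q2 that by (auto simp: Dp_def kdefined_def)
    next
      case False
      then show ?thesis using zD by (simp add: in_keys_iff)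
    qed
  qed
  have hz: "ev \<phi> (hs ! i) (yvec n w j) = 0" if "j < k" "i < n" for i j
  proof -
    define r where "r = j * n + i"
    have "r < Suc j * n" using that by (simp add: r_def)
    also have "\<dots> \<le> k * n" using that by (intro mult_right_mono) auto
    finally have r: "r < k * n" .
    have rm: "r mod n = i" "r div n = j" using that by (simp_all add: r_def)
    have "sysG n k (map (\<lambda>h. spec h p) hs) sel r w = 0" using w r by simp
    then show ?thesis using r rm that len by (simp add: sysG_def meval_spec \<phi>_def)
  qed
  have hL: "(\<Sum>c<k. w (k * n + a * k + c) * mono_eval (sel ! b) (yvec n w c)) = (if a = b then 1 else 0)"
    if "a < k" "b < k" for a b
  proof -
    define r where "r = k * n + a * k + b"
    have "r < k * n + (a + 1) * k" using that by (simp add: r_def)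
    also have "\<dots> \<le> k * n + k * k" using that by (intro add_left_mono mult_right_mono) auto
    finally have r: "r < k * n + k * k" .
    have r2: "\<not> r < k * n" "(r - k * n) div k = a" "(r - k * n) mod k = b" using that by (simp_all add: r_def)
    have "sysG n k (map (\<lambda>h. spec h p) hs) sel r w = 0" using w r by simp
    then show ?thesis using r2 by (simp add: sysG_def Let_def r_def[symmetric])
  qed
  have fy: "ev \<phi> f (yvec n w j) = 0" if "j < k" for j
  proof -
    have "ev \<phi> f (yvec n w j) = (\<Sum>i<length hs. ev \<phi> (g i * hs ! i) (yvec n w j))"
      unfolding fg by (rule ev_sum[OF ph]) (simp add: cin_mult[OF ph] cing cinh)
    also have "\<dots> = (\<Sum>i<length hs. ev \<phi> (g i) (yvec n w j) * ev \<phi> (hs ! i) (yvec n w j))"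
      by (intro sum.cong refl ev_mult[OF ph] cing cinh) auto
    also have "\<dots> = 0" using hz[OF that] len by simp
    finally show ?thesis .
  qed
  define u where "u b = \<phi> (Poly_Mapping.lookup f (sel ! b))" for b
  define S where "S c b = mono_eval (sel ! b) (yvec n w c)" for c b
  define L where "L a c = w (k * n + a * k + c)" for a c
  have fsel: "ev \<phi> f y = (\<Sum>b<k. u b * mono_eval (sel ! b) y)" for y
  proof -
    have "\<phi> 0 = 0" by (simp add: \<phi>_def)
    then have "ev \<phi> f y = (\<Sum>m\<in>set sel. \<phi> (Poly_Mapping.lookup f m) * mono_eval m y)"
      by (intro ev_over fk) auto
    then show ?thesis using sum_sel[OF dsel lsel] by (simp add: u_def)
  qed
  have Su: "(\<Sum>b<k. u b * S c b) = 0" if "c < k" for c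
    using fy[OF that] fsel[of "yvec n w c"] by (simp add: S_def)
  have "u b0 = (\<Sum>b<k. (if b0 = b then 1 else 0) * u b)"
  proof -
    have "(\<Sum>b<k. (if b0 = b then 1 else 0) * u b) = (\<Sum>b<k. if b0 = b then u b else 0)"
      by (rule sum.cong) auto
    then show ?thesis using b0(1) by simp
  qed
  also have "\<dots> = (\<Sum>b<k. (\<Sum>c<k. L b0 c * S c b) * u b)"
    using hL[OF b0(1)] by (simp add: L_def S_def)
  also have "\<dots> = (\<Sum>c<k. L b0 c * (\<Sum>b<k. u b * S c b))"
  proof -
    have "(\<Sum>b<k. (\<Sum>c<k. L b0 c * S c b) * u b) = (\<Sum>b<k. \<Sum>c<k. L b0 c * (u b * S c b))"
      by (intro sum.cong refl) (simp add: sum_distrib_right sum_distrib_left mult_ac)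
    also have "\<dots> = (\<Sum>c<k. \<Sum>b<k. L b0 c * (u b * S c b))" by (rule sum.swap)
    also have "\<dots> = (\<Sum>c<k. L b0 c * (\<Sum>b<k. u b * S c b))" by (simp add: sum_distrib_left)
    finally show ?thesis .
  qed
  also have "\<dots> = 0" using Su by simp
  finally have "u b0 = 0" .
  moreover have "u b0 = qeval a0 p / qeval b0' p"
    unfolding u_def \<phi>_def b0(2) c0_def[symmetric] using kval_eq[OF ab0(1) qb0] .
  ultimately show False using qa0 qb0 by simp
qed


theorem theorem3p1:
  fixes l n k d :: nat
    and hs :: "kfield mpoly list"
    and pstar :: "nat \<Rightarrow> complex"
    and sel :: "(nat \<Rightarrow>\<^sub>0 nat) list"
  assumes "length hs = n"
    and "\<forall>h\<in>set hs. h \<in> mpolys n \<and> (\<forall>m\<in>Poly_Mapping.keys h. in_K l (Poly_Mapping.lookup h m))"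
    and "generically_radical_zero_dim l n hs"
    and "\<forall>h\<in>set hs. coeffs_defined h pstar"
    and "length sel = k" and "distinct sel"
    and "\<forall>m\<in>set sel. Poly_Mapping.keys m \<subseteq> {..<n} \<and> tdeg m \<le> d"
    and "\<exists>z. (\<forall>r<k*n + k*k. sysG n k (map (\<lambda>h. spec h pstar) hs) sel r z = 0) \<and>
             Matrix.invertible_mat (jacobian (k*n + k*k) (sysG n k (map (\<lambda>h. spec h pstar) hs) sel) z)"
  shows "HF n (ideal_gen n hs) d \<ge> int k"
proof -
  note len = assms(1)
  have hsm: "\<forall>h\<in>set hs. h \<in> mpolys n" using assms(2) by blast
  note hdef = assms(4) and lsel = assms(5) and dsel = assms(6)
  have selm: "\<forall>m\<in>set sel. Poly_Mapping.keys m \<subseteq> {..<n}" using assms(7) by blast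
  define N where "N = k * n + k * k"
  define Fs where "Fs r p w = sysG n k (map (\<lambda>h. spec h p) hs) sel r w" for r p w
  obtain z where z0: "\<forall>r<N. Fs r pstar z = 0"
    and inv: "Matrix.invertible_mat (jacobian N (sysG n k (map (\<lambda>h. spec h pstar) hs) sel) z)"
    using assms(8) unfolding N_def Fs_def by blast
  have "\<forall>r. \<exists>D. r < N \<longrightarrow> hasdd N pstar z (Fs r) D"
  proof (intro allI)
    fix r
    show "\<exists>D. r < N \<longrightarrow> hasdd N pstar z (Fs r) D"
    proof (cases "r < N")
      case True
      have "good N pstar z (Fs r)"
        unfolding N_def Fs_def by (rule sys_good[OF len hsm hdef lsel selm True[unfolded N_def]])
      then show ?thesis by (auto simp: good_def)
    qed auto
  qed
  then obtain D where D: "\<And>r. r < N \<Longrightarrow> hasdd N pstar z (Fs r) (D r)"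
    by (metis choice)
  have jac: "jacobian N (sysG n k (map (\<lambda>h. spec h pstar) hs) sel) z = Matrix.mat N N (\<lambda>(r, c). D r c pstar z z)"
  proof (rule eq_matI)
    fix r c assume rc: "r < dim_row (Matrix.mat N N (\<lambda>(r, c). D r c pstar z z))" "c < dim_col (Matrix.mat N N (\<lambda>(r, c). D r c pstar z z))"
    then have rc': "r < N" "c < N" by auto
    have "deriv (\<lambda>t. Fs r pstar (z(c := t))) (z c) = D r c pstar z z"
      by (rule hasdd_deriv[OF D[OF rc'(1)] rc'(2)])
    then show "jacobian N (sysG n k (map (\<lambda>h. spec h pstar) hs) sel) z $$ (r, c) = Matrix.mat N N (\<lambda>(r, c). D r c pstar z z) $$ (r, c)"
      using rc' by (simp add: jacobian_def Fs_def)
  qed (simp_all add: jacobian_def)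
  obtain A where AJ: "\<forall>i<N. \<forall>c<N. (\<Sum>r<N. A i r * D r c pstar z z) = (if i = c then 1 else 0)"
    and JA: "\<forall>r<N. \<forall>j<N. (\<Sum>i<N. D r i pstar z z * A i j) = (if r = j then 1 else 0)"
    using jac_inv[of N "\<lambda>(r, c). D r c pstar z z"] inv unfolding jac by auto
  obtain P \<delta> where P: "\<delta> > 0" "\<forall>p. near P \<delta> p pstar \<longrightarrow> (\<exists>w. \<forall>r<N. Fs r p w = 0)"
    using ift[of N pstar z Fs D A] D z0 AJ JA by blast
  define V where "V = ideal_le (ideal_gen n hs) d"
  define T where "T = mons n d - set sel"
  have selT: "set sel \<subseteq> mons n d" using assms(7) by (auto simp: mons_def)
  have fin: "finite (mons n d)" "card (mons n d) = (n + d) choose d" using mons_finite_card by auto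
  have kern': "f = 0" if f: "f \<in> V" "\<forall>m\<in>T. Poly_Mapping.lookup f m = 0" for f
  proof (rule kern[OF len hsm hdef lsel dsel P(1)])
    show "\<forall>p. near P \<delta> p pstar \<longrightarrow> (\<exists>w. \<forall>r<k * n + k * k. sysG n k (map (\<lambda>h. spec h p) hs) sel r w = 0)"
      using P(2) by (simp add: N_def Fs_def)
    show fI: "f \<in> ideal_gen n hs" using f by (simp add: V_def ideal_le_def)
    show "Poly_Mapping.keys f \<subseteq> set sel"
    proof
      fix m assume m: "m \<in> Poly_Mapping.keys f"
      have "f \<in> mpolys n" by (rule ideal_mpolys[OF hsm fI])
      then have "Poly_Mapping.keys m \<subseteq> {..<n}" using m by (auto simp: mpolys_def)
      moreover have "tdeg m \<le> d" using f(1) m by (auto simp: V_def ideal_le_def)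
      ultimately have "m \<in> mons n d" by (simp add: mons_def)
      moreover have "Poly_Mapping.lookup f m \<noteq> 0" using m by (simp add: in_keys_iff)
      ultimately show "m \<in> set sel" using f(2) unfolding T_def by blast
    qed
  qed
  have "vector_space.dim (cscale :: kfield \<Rightarrow> kfield mpoly \<Rightarrow> kfield mpoly) V \<le> card T"
    by (rule dim_bound) (use ideal_le_subspace kern' fin in \<open>auto simp: V_def T_def\<close>)
  moreover have "card T = card (mons n d) - k"
    unfolding T_def using selT fin(1) by (simp add: card_Diff_subset distinct_card[OF dsel] lsel)
  moreover have "k \<le> card (mons n d)"
    using card_mono[OF fin(1) selT] distinct_card[OF dsel] lsel by simp
  ultimately have "vector_space.dim (cscale :: kfield \<Rightarrow> kfield mpoly \<Rightarrow> kfield mpoly) V + k \<le> (n + d) choose d"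
    using fin(2) by linarith
  then have "int (vector_space.dim (cscale :: kfield \<Rightarrow> kfield mpoly \<Rightarrow> kfield mpoly) V) + int k \<le> int ((n + d) choose d)"
    by linarith
  then show ?thesis unfolding HF_def V_def by linarith
qed

end
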